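(* Let $\Gamma$ be as below. (1) If $q=\prod_i p_i^{m_i}$ is the prime factorization of the positive integer $q$, then the natural map $\Gamma/\Gamma(q)\to\prod_i\Gamma/\Gamma(p_i^{m_i})$ is an isomorphism. (2) If $\gcd(q,6)=1$, then $\Gamma/\Gamma(q)=SL(2,\mathbb{Z}[\sqrt2 i]/(q))$, i.e. the reduction map $\Gamma\to SL(2,\mathbb{Z}[\sqrt2 i]/(q))$ is surjective. (3) If $l\ge3$, the kernel of the reduction map $\Gamma/\Gamma(2^l)\to\Gamma/\Gamma(8)$ equals the kernel of $SL(2,\mathbb{Z}[\sqrt2 i]/(2^l))\to SL(2,\mathbb{Z}[\sqrt2 i]/(8))$; if $l\ge1$, the kernel of $\Gamma/\Gamma(3^l)\to\Gamma/\Gamma(3)$ equals the kernel of $SL(2,\mathbb{Z}[\sqrt2 i]/(3^l))\to SL(2,\mathbb{Z}[\sqrt2 i]/(3))$.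
   Context: Here $\sqrt{2}i=\sqrt{-2}$ and $M_1=\begin{pmatrix}1&2\\-2&-3\end{pmatrix}$, $M_2=\begin{pmatrix}1-2\sqrt2 i&2\\2+4\sqrt2 i&-3+2\sqrt2 i\end{pmatrix}$, $M_3=\begin{pmatrix}1&0\\-4&1\end{pmatrix}$, $M_4=\begin{pmatrix}-1+2\sqrt2 i&-4\\-4\sqrt2 i&7-2\sqrt2 i\end{pmatrix}$, $M_5=\begin{pmatrix}-1&2\\2&-5\end{pmatrix}$, $M_6=\begin{pmatrix}1+2\sqrt2 i&-2\\-6-4\sqrt2 i&5-2\sqrt2 i\end{pmatrix}$, $M_7=\begin{pmatrix}-1-2\sqrt2 i&4\\4+4\sqrt2 i&-9+2\sqrt2 i\end{pmatrix}$. $\Gamma=\langle M_1,\dots,M_7\rangle\subset SL(2,\mathbb{Z}[\sqrt2 i])$. $\Gamma(q)$ is the set of $\gamma\in\Gamma$ with $\gamma\equiv I\pmod{q\mathbb{Z}[\sqrt2 i]}$, and $\Gamma/\Gamma(q)$ is identified with the image of $\Gamma$ in $SL(2,\mathbb{Z}[\sqrt2 i]/(q))$. *)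

theory Defs
  imports Main "HOL-Computational_Algebra.Primes" "HOL-Library.FuncSet"
begin

text \<open>Elements of Z[sqrt(-2)]: a pair (a,b) stands for a + b*sqrt(-2).\<close>
type_synonym zs = "int \<times> int"

fun zs_add :: "zs \<Rightarrow> zs \<Rightarrow> zs" where
  "zs_add (a,b) (c,d) = (a + c, b + d)"

fun zs_mul :: "zs \<Rightarrow> zs \<Rightarrow> zs" where
  "zs_mul (a,b) (c,d) = (a*c - 2*b*d, a*d + b*c)"

fun zs_neg :: "zs \<Rightarrow> zs" where
  "zs_neg (a,b) = (-a, -b)"

fun zs_red :: "int \<Rightarrow> zs \<Rightarrow> zs" where
  "zs_red q (a,b) = (a mod q, b mod q)"

datatype mat2 = Mat zs zs zs zs

fun mmul :: "mat2 \<Rightarrow> mat2 \<Rightarrow> mat2" where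
  "mmul (Mat a b c d) (Mat e f g h) =
     Mat (zs_add (zs_mul a e) (zs_mul b g)) (zs_add (zs_mul a f) (zs_mul b h))
         (zs_add (zs_mul c e) (zs_mul d g)) (zs_add (zs_mul c f) (zs_mul d h))"

fun mdet :: "mat2 \<Rightarrow> zs" where
  "mdet (Mat a b c d) = zs_add (zs_mul a d) (zs_neg (zs_mul b c))"

text \<open>Inverse of a determinant-one matrix (adjugate).\<close>
fun minv :: "mat2 \<Rightarrow> mat2" where
  "minv (Mat a b c d) = Mat d (zs_neg b) (zs_neg c) a"

definition mI :: mat2 where "mI = Mat (1,0) (0,0) (0,0) (1,0)"

fun mred :: "int \<Rightarrow> mat2 \<Rightarrow> mat2" where
  "mred q (Mat a b c d) = Mat (zs_red q a) (zs_red q b) (zs_red q c) (zs_red q d)"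

definition M1 :: mat2 where "M1 = Mat (1,0) (2,0) (-2,0) (-3,0)"
definition M2 :: mat2 where "M2 = Mat (1,-2) (2,0) (2,4) (-3,2)"
definition M3 :: mat2 where "M3 = Mat (1,0) (0,0) (-4,0) (1,0)"
definition M4 :: mat2 where "M4 = Mat (-1,2) (-4,0) (0,-4) (7,-2)"
definition M5 :: mat2 where "M5 = Mat (-1,0) (2,0) (2,0) (-5,0)"
definition M6 :: mat2 where "M6 = Mat (1,2) (-2,0) (-6,-4) (5,-2)"
definition M7 :: mat2 where "M7 = Mat (-1,-2) (4,0) (4,4) (-9,2)"

inductive_set Gamma :: "mat2 set" where
  id: "mI \<in> Gamma"
| gen: "M \<in> {M1, M2, M3, M4, M5, M6, M7} \<Longrightarrow> M \<in> Gamma"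
| mult: "A \<in> Gamma \<Longrightarrow> B \<in> Gamma \<Longrightarrow> mmul A B \<in> Gamma"
| inv: "A \<in> Gamma \<Longrightarrow> minv A \<in> Gamma"

text \<open>Gamma/Gamma(q), identified with the image of Gamma in SL(2, Z[sqrt(-2)]/(q)).\<close>
definition GammaMod :: "int \<Rightarrow> mat2 set" where
  "GammaMod q = mred q ` Gamma"

text \<open>SL(2, Z[sqrt(-2)]/(q)), elements given by canonical representatives.\<close>
definition SL2mod :: "int \<Rightarrow> mat2 set" where
  "SL2mod q = {A. mred q A = A \<and> zs_red q (mdet A) = zs_red q (1,0)}"

end

theory Submission
  imports Defs
begin

datatype zz = Z (re: int) (im: int)

instantiation zz :: comm_ring_1
begin
definition "zero_zz = Z 0 0"
definition "one_zz = Z 1 0"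
definition "plus_zz x y = Z (re x + re y) (im x + im y)"
definition "minus_zz x y = Z (re x - re y) (im x - im y)"
definition "uminus_zz x = Z (- re x) (- im x)"
definition "times_zz x y = Z (re x * re y - 2 * im x * im y) (re x * im y + im x * re y)"
instance
  by standard (auto simp: zero_zz_def one_zz_def plus_zz_def minus_zz_def uminus_zz_def times_zz_def
     algebra_simps zz.expand)
end

lemma zz_simps[simp]:
  "Z a b + Z c d = Z (a+c) (b+d)" "Z a b - Z c d = Z (a-c) (b-d)" "- Z a b = Z (-a) (-b)"
  "Z a b * Z c d = Z (a*c - 2*b*d) (a*d + b*c)"
  by (simp_all add: plus_zz_def minus_zz_def uminus_zz_def times_zz_def)
lemma zz_01: "0 = Z 0 0" "1 = Z 1 0"
  by (simp_all add: zero_zz_def one_zz_def plus_zz_def minus_zz_def uminus_zz_def times_zz_def)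

lemma of_nat_zz: "of_nat n = Z (int n) 0"
  by (induct n) (auto simp: zz_01)
lemma of_int_zz: "of_int n = Z n 0"
  by (cases n rule: int_cases) (auto simp: of_int_diff of_nat_zz zz_01)
lemma numeral_zz: "numeral n = Z (numeral n) 0"
  using of_nat_zz[of "numeral n"] by (simp only: of_nat_numeral)


datatype m2 = M zz zz zz zz

instantiation m2 :: ring_1
begin
fun plus_m2 where "plus_m2 (M a b c d) (M e f g h) = M (a+e) (b+f) (c+g) (d+h)"
fun minus_m2 where "minus_m2 (M a b c d) (M e f g h) = M (a-e) (b-f) (c-g) (d-h)"
fun uminus_m2 where "uminus_m2 (M a b c d) = M (-a) (-b) (-c) (-d)"
fun times_m2 where "times_m2 (M a b c d) (M e f g h) = M (a*e+b*g) (a*f+b*h) (c*e+d*g) (c*f+d*h)"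
definition "zero_m2 = M 0 0 0 0"
definition "one_m2 = M 1 0 0 1"
instance
proof
  fix x y z :: m2
  show "x + y + z = x + (y + z)" by (cases x; cases y; cases z) (simp add: algebra_simps)
  show "x + y = y + x" by (cases x; cases y) (simp add: algebra_simps)
  show "0 + x = x" by (cases x) (simp add: zero_m2_def)
  show "- x + x = 0" by (cases x) (simp add: zero_m2_def)
  show "x - y = x + - y" by (cases x; cases y) simp
  show "x * y * z = x * (y * z)" by (cases x; cases y; cases z) (simp add: algebra_simps)
  show "1 * x = x" by (cases x) (simp add: one_m2_def)
  show "x * 1 = x" by (cases x) (simp add: one_m2_def)
  show "(x + y) * z = x * z + y * z" by (cases x; cases y; cases z) (simp add: algebra_simps)
  show "x * (y + z) = x * y + x * z" by (cases x; cases y; cases z) (simp add: algebra_simps)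
  show "(0::m2) \<noteq> 1" by (simp add: zero_m2_def one_m2_def)
qed
end

lemma m2_zero_one: "(0::m2) = M 0 0 0 0" "(1::m2) = M 1 0 0 1"
  by (simp_all add: zero_m2_def one_m2_def)

lemma of_nat_m2: "(of_nat n :: m2) = M (of_nat n) 0 0 (of_nat n)"
  by (induct n) (simp_all add: m2_zero_one)
lemma of_int_m2: "(of_int n :: m2) = M (of_int n) 0 0 (of_int n)"
  by (cases n rule: int_cases) (simp_all add: of_nat_m2 of_int_diff m2_zero_one)

fun det2 :: "m2 \<Rightarrow> zz" where "det2 (M a b c d) = a*d - b*c"
fun adj :: "m2 \<Rightarrow> m2" where "adj (M a b c d) = M d (-b) (-c) a"
definition E :: "zz \<Rightarrow> m2" where "E t = M 1 t 0 1"
definition F :: "zz \<Rightarrow> m2" where "F t = M 1 0 t 1"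

lemma det_mult: "det2 (A*B) = det2 A * det2 B"
  by (cases A; cases B) (simp add: algebra_simps)
lemma det_one[simp]: "det2 1 = 1" by (simp add: m2_zero_one)
lemma adj_mult_right: "A * adj A = of_int 0 + M (det2 A) 0 0 (det2 A)"
  by (cases A) (simp add: algebra_simps m2_zero_one)
lemma adj_right: "det2 A = 1 \<Longrightarrow> A * adj A = 1"
  by (cases A) (simp add: algebra_simps m2_zero_one)
lemma adj_left: "det2 A = 1 \<Longrightarrow> adj A * A = 1"
  by (cases A) (simp add: algebra_simps m2_zero_one)
lemma det_adj: "det2 (adj A) = det2 A" by (cases A) (simp add: algebra_simps)
lemma adj_mult: "adj (A*B) = adj B * adj A" by (cases A; cases B) (simp add: algebra_simps)
lemma adj_one[simp]: "adj 1 = 1" by (simp add: m2_zero_one)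
lemma det_E[simp]: "det2 (E t) = 1" and det_F[simp]: "det2 (F t) = 1"
  by (simp_all add: E_def F_def)
lemma E_add: "E x * E y = E (x+y)" and F_add: "F x * F y = F (x+y)"
  by (simp_all add: E_def F_def algebra_simps)
lemma E_pow: "E x ^ k = E (of_nat k * x)"
  by (induct k) (simp_all add: E_add algebra_simps, simp add: E_def m2_zero_one)
lemma F_pow: "F x ^ k = F (of_nat k * x)"
  by (induct k) (simp_all add: F_add algebra_simps, simp add: F_def m2_zero_one)

definition zc :: "int \<Rightarrow> zz \<Rightarrow> zz \<Rightarrow> bool" where
  "zc n x y \<longleftrightarrow> (of_int n :: zz) dvd (x - y)"

lemma zc_Z: "zc n (Z a b) (Z c d) \<longleftrightarrow> n dvd (a - c) \<and> n dvd (b - d)"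
proof
  assume "zc n (Z a b) (Z c d)"
  then obtain k where "Z (a-c) (b-d) = Z n 0 * k" by (auto simp: zc_def dvd_def of_int_zz)
  then show "n dvd (a - c) \<and> n dvd (b - d)" by (cases k) auto
next
  assume "n dvd (a - c) \<and> n dvd (b - d)"
  then obtain u v where "a - c = n*u" "b - d = n*v" by (auto simp: dvd_def)
  then have "Z a b - Z c d = of_int n * Z u v" by (simp add: of_int_zz)
  then show "zc n (Z a b) (Z c d)" unfolding zc_def by (metis dvd_triv_left)
qed

lemma zc_refl[simp]: "zc n x x" by (simp add: zc_def)
lemma zc_sym: "zc n x y \<Longrightarrow> zc n y x"
  unfolding zc_def by (metis dvd_minus_iff minus_diff_eq)
lemma zc_trans: assumes "zc n x y" "zc n y z" shows "zc n x z"
proof -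
  have "x - z = (x - y) + (y - z)" by simp
  then show ?thesis using assms unfolding zc_def by (metis dvd_add)
qed
lemma zc_add: assumes "zc n x x'" "zc n y y'" shows "zc n (x+y) (x'+y')"
proof -
  have "(x+y) - (x'+y') = (x - x') + (y - y')" by simp
  then show ?thesis using assms unfolding zc_def by (metis dvd_add)
qed
lemma zc_diff: assumes "zc n x x'" "zc n y y'" shows "zc n (x-y) (x'-y')"
proof -
  have "(x-y) - (x'-y') = (x - x') - (y - y')" by simp
  then show ?thesis using assms unfolding zc_def by (metis dvd_diff)
qed
lemma zc_neg: assumes "zc n x x'" shows "zc n (-x) (-x')"
proof -
  have "(-x) - (-x') = - (x - x')" by simp
  then show ?thesis using assms unfolding zc_def by (metis dvd_minus_iff)
qed
lemma zc_mult: assumes "zc n x x'" "zc n y y'" shows "zc n (x*y) (x'*y')"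
proof -
  have "x*y - x'*y' = x*(y-y') + (x-x')*y'" by (simp add: algebra_simps)
  then show ?thesis using assms unfolding zc_def by (metis dvd_add dvd_mult dvd_mult2)
qed
lemma of_int_dvd_zz: "m dvd n \<Longrightarrow> (of_int m :: zz) dvd of_int n"
  by (metis dvd_def of_int_mult)
lemma zc_dvd: "m dvd n \<Longrightarrow> zc n x y \<Longrightarrow> zc m x y"
  unfolding zc_def by (meson dvd_trans of_int_dvd_zz)

fun mc :: "int \<Rightarrow> m2 \<Rightarrow> m2 \<Rightarrow> bool" where
  "mc n (M a b c d) (M e f g h) \<longleftrightarrow> zc n a e \<and> zc n b f \<and> zc n c g \<and> zc n d h"

lemma mc_refl[simp]: "mc n A A" by (cases A) simp
lemma mc_sym: "mc n A B \<Longrightarrow> mc n B A" by (cases A; cases B) (auto intro: zc_sym)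
lemma mc_trans: "mc n A B \<Longrightarrow> mc n B C \<Longrightarrow> mc n A C"
  by (cases A; cases B; cases C) (auto intro: zc_trans)
lemma mc_mult: "mc n A A' \<Longrightarrow> mc n B B' \<Longrightarrow> mc n (A*B) (A'*B')"
  by (cases A; cases A'; cases B; cases B') (auto intro!: zc_add zc_mult)
lemma mc_add: "mc n A A' \<Longrightarrow> mc n B B' \<Longrightarrow> mc n (A+B) (A'+B')"
  by (cases A; cases A'; cases B; cases B') (auto intro!: zc_add zc_mult)
lemma mc_adj: "mc n A A' \<Longrightarrow> mc n (adj A) (adj A')"
  by (cases A; cases A') (auto intro!: zc_neg)
lemma mc_det: "mc n A A' \<Longrightarrow> zc n (det2 A) (det2 A')"
  by (cases A; cases A') (auto intro!: zc_diff zc_mult)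
lemma mc_dvd: "m dvd n \<Longrightarrow> mc n A B \<Longrightarrow> mc m A B"
  by (cases A; cases B) (auto intro: zc_dvd)
lemma mc_pow: "mc n A B \<Longrightarrow> mc n (A^k) (B^k)"
  by (induct k) (auto intro: mc_mult)
lemma zc_one[simp]: "zc 1 x y" by (simp add: zc_def)
lemma mc_one_mod[simp]: "mc 1 A B" by (cases A; cases B) simp

lemma mc_iff_ex: "mc n A B \<longleftrightarrow> (\<exists>C. A = B + of_int n * C)"
proof
  assume "mc n A B"
  then obtain a b c d e f g h where AB: "A = M a b c d" "B = M e f g h"
    and "zc n a e" "zc n b f" "zc n c g" "zc n d h" by (cases A; cases B) auto
  then obtain k1 k2 k3 k4 where "a - e = of_int n * k1" "b - f = of_int n * k2"
     "c - g = of_int n * k3" "d - h = of_int n * k4" unfolding zc_def dvd_def by metis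
  then have "A = B + of_int n * M k1 k2 k3 k4" unfolding AB of_int_m2
    by (simp add: algebra_simps)
  then show "\<exists>C. A = B + of_int n * C" ..
next
  assume "\<exists>C. A = B + of_int n * C"
  then obtain C where C: "A = B + of_int n * C" ..
  show "mc n A B" unfolding C of_int_m2
    by (cases B; cases C) (simp add: zc_def)
qed


fun zof :: "zs \<Rightarrow> zz" where "zof (a,b) = Z a b"
fun cv :: "mat2 \<Rightarrow> m2" where "cv (Mat a b c d) = M (zof a) (zof b) (zof c) (zof d)"

lemma zof_add: "zof (zs_add x y) = zof x + zof y" by (cases x; cases y) simp
lemma zof_mul: "zof (zs_mul x y) = zof x * zof y" by (cases x; cases y) simp
lemma zof_neg: "zof (zs_neg x) = - zof x" by (cases x) simp
lemma zof_inj: "zof x = zof y \<Longrightarrow> x = y" by (cases x; cases y) simp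
lemma cv_inj: "cv A = cv B \<Longrightarrow> A = B"
  by (cases A; cases B) (auto dest: zof_inj)
lemma cv_mmul: "cv (mmul A B) = cv A * cv B"
  by (cases A; cases B) (simp add: zof_add zof_mul)
lemma cv_minv: "cv (minv A) = adj (cv A)"
  by (cases A) (simp add: zof_neg)
lemma cv_mI: "cv mI = 1" by (simp add: mI_def m2_zero_one zz_01)
lemma zof_mdet: "zof (mdet A) = det2 (cv A)"
  by (cases A) (simp add: zof_add zof_mul zof_neg)

lemma zs_red_eq: "zs_red q x = zs_red q y \<longleftrightarrow> zc q (zof x) (zof y)"
  by (cases x; cases y) (simp add: zc_Z mod_eq_dvd_iff)
lemma mred_eq: "mred q A = mred q B \<longleftrightarrow> mc q (cv A) (cv B)"
  by (cases A; cases B) (simp add: zs_red_eq[symmetric])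
lemma zs_red_idem: "zs_red q (zs_red q x) = zs_red q x" by (cases x) simp
lemma mred_idem: "mred q (mred q A) = mred q A" by (cases A) (simp add: zs_red_idem)
lemma zs_red_red: "m dvd n \<Longrightarrow> zs_red m (zs_red n x) = zs_red m x"
  by (cases x) (simp add: mod_mod_cancel)
lemma mred_mred: "m dvd n \<Longrightarrow> mred m (mred n A) = mred m A"
  by (cases A) (simp add: zs_red_red)
lemma mc_mred: "mc q (cv (mred q A)) (cv A)"
  using mred_eq[of q "mred q A" A] by (simp add: mred_idem)

definition G :: "m2 set" where "G = cv ` Gamma"

lemma G_one: "1 \<in> G" unfolding G_def using Gamma.id cv_mI by force
lemma G_mult: assumes "a \<in> G" "b \<in> G" shows "a * b \<in> G"
proof -
  obtain x where "x \<in> Gamma" "a = cv x" using assms(1) G_def by auto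
  moreover obtain y where "y \<in> Gamma" "b = cv y" using assms(2) G_def by auto
  ultimately
  show ?thesis unfolding G_def using cv_mmul Gamma.mult by (metis image_eqI)
qed
lemma G_adj: assumes "a \<in> G" shows "adj a \<in> G"
proof -
  obtain x where "x \<in> Gamma" "a = cv x" using assms G_def by auto
  then show ?thesis unfolding G_def using cv_minv Gamma.inv by (metis image_eqI)
qed
lemma G_pow: "a \<in> G \<Longrightarrow> a ^ k \<in> G"
  by (induct k) (auto intro: G_one G_mult)

definition "g1 = M (Z 1 0) (Z 2 0) (Z (-2) 0) (Z (-3) 0)"
definition "g2 = M (Z 1 (-2)) (Z 2 0) (Z 2 4) (Z (-3) 2)"
definition "g3 = M (Z 1 0) (Z 0 0) (Z (-4) 0) (Z 1 0)"
definition "g4 = M (Z (-1) 2) (Z (-4) 0) (Z 0 (-4)) (Z 7 (-2))"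
definition "g5 = M (Z (-1) 0) (Z 2 0) (Z 2 0) (Z (-5) 0)"
definition "g6 = M (Z 1 2) (Z (-2) 0) (Z (-6) (-4)) (Z 5 (-2))"
definition "g7 = M (Z (-1) (-2)) (Z 4 0) (Z 4 4) (Z (-9) 2)"

lemma cv_gens: "cv M1 = g1" "cv M2 = g2" "cv M3 = g3" "cv M4 = g4" "cv M5 = g5" "cv M6 = g6" "cv M7 = g7"
  by (simp_all add: M1_def M2_def M3_def M4_def M5_def M6_def M7_def
     g1_def g2_def g3_def g4_def g5_def g6_def g7_def)

lemma G_gens: "g1 \<in> G" "g2 \<in> G" "g3 \<in> G" "g4 \<in> G" "g5 \<in> G" "g6 \<in> G" "g7 \<in> G"
  unfolding G_def cv_gens[symmetric] by (auto intro!: imageI Gamma.gen)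

lemma G_induct[consumes 1, case_names one g1 g2 g3 g4 g5 g6 g7 mult adj]:
  assumes "g \<in> G" "P 1" "P g1" "P g2" "P g3" "P g4" "P g5" "P g6" "P g7"
    "\<And>a b. a \<in> G \<Longrightarrow> b \<in> G \<Longrightarrow> P a \<Longrightarrow> P b \<Longrightarrow> P (a*b)"
    "\<And>a. a \<in> G \<Longrightarrow> P a \<Longrightarrow> P (adj a)"
  shows "P g"
proof -
  obtain x where x: "x \<in> Gamma" "g = cv x" using assms(1) unfolding G_def by auto
  have "P (cv x)" using x(1)
  proof (induct rule: Gamma.induct)
    case id then show ?case using assms(2) cv_mI by simp
  next
    case (gen M) then show ?case using assms(3-9) cv_gens by auto
  next
    case (mult A B) then show ?case using assms(10)[of "cv A" "cv B"] cv_mmul G_def by auto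
  next
    case (inv A) then show ?case using assms(11)[of "cv A"] cv_minv G_def by auto
  qed
  then show ?thesis using x by simp
qed

lemma G_det: "g \<in> G \<Longrightarrow> det2 g = 1"
proof (induct rule: G_induct)
  case mult then show ?case by (simp add: det_mult)
next
  case adj then show ?case by (simp add: det_adj)
qed (simp_all add: g1_def g2_def g3_def g4_def g5_def g6_def g7_def zz_01)

lemma G_mod2: "g \<in> G \<Longrightarrow> mc 2 g 1"
proof (induct rule: G_induct)
  case (mult a b) then show ?case using mc_mult[of 2 a 1 b 1] by simp
next
  case (adj a) then show ?case using mc_adj[of 2 a 1] by simp
qed (simp_all add: g1_def g2_def g3_def g4_def g5_def g6_def g7_def m2_zero_one zz_01 zc_Z)

lemma G_inv: "g \<in> G \<Longrightarrow> g * adj g = 1" "g \<in> G \<Longrightarrow> adj g * g = 1"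
  by (simp_all add: G_det adj_left adj_right)


lemma exists_lin:
  fixes c q x :: int
  assumes "coprime c q" "q > 0"
  shows "\<exists>t::nat. q dvd c * int t - x"
proof -
  obtain u v where uv: "u * c + v * q = 1"
    using bezout_int[of c q] assms(1) by (metis coprime_iff_gcd_eq_1)
  define t where "t = nat ((u*x) mod q)"
  have t: "int t = (u*x) mod q" using assms(2) by (simp add: t_def)
  have "c * int t - x = c * (u*x - q * ((u*x) div q)) - x"
    by (simp add: t minus_div_mult_eq_mod[symmetric] algebra_simps)
  also have "\<dots> = (u*c + v*q - 1) * x - q * (v * x + c * ((u*x) div q))" by (simp add: algebra_simps)
  also have "\<dots> = q * (- v * x - c * ((u*x) div q))" unfolding uv by (simp add: algebra_simps)
  finally have "q dvd c * int t - x" by (metis dvd_triv_left)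
  then show ?thesis by blast
qed

definition S :: "int \<Rightarrow> int \<Rightarrow> m2 set" where
  "S q Q = {A. \<exists>g\<in>G. mc q g A \<and> mc Q g 1}"

lemma S_mult: "A \<in> S q Q \<Longrightarrow> B \<in> S q Q \<Longrightarrow> A * B \<in> S q Q"
  unfolding S_def using G_mult mc_mult by (smt (verit) mem_Collect_eq mult_1)
lemma S_cong: "A \<in> S q Q \<Longrightarrow> mc q A B \<Longrightarrow> B \<in> S q Q"
  unfolding S_def using mc_trans by blast
lemma S_one: "1 \<in> S q Q" unfolding S_def using G_one by force
lemma S_pow: "A \<in> S q Q \<Longrightarrow> A ^ k \<in> S q Q"
  by (induct k) (auto intro: S_mult S_one)

lemma S_param:
  fixes P :: "int \<Rightarrow> m2"
  assumes "h \<in> G" "\<And>k. h ^ k = P (int k * c)"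
    "\<And>y. Q dvd y \<Longrightarrow> mc Q (P y) 1" "\<And>y y'. q dvd y - y' \<Longrightarrow> mc q (P y) (P y')"
    "coprime (c*Q) q" "q > 0" "Q > 0"
  shows "P x \<in> S q Q"
proof -
  obtain t where t: "q dvd (c*Q) * int t - x" using exists_lin assms(5,6) by blast
  define k where "k = nat Q * t"
  have k: "int k * c = (c*Q) * int t" using assms(7) by (simp add: k_def)
  have "h ^ k \<in> G" using G_pow assms(1) by blast
  moreover have hk: "h^k = P ((c*Q) * int t)" using assms(2)[of k] k by simp
  moreover have "mc q (h^k) (P x)" unfolding hk using assms(4)[OF t] .
  moreover have "mc Q (h^k) 1" unfolding hk by (rule assms(3)) simp
  ultimately show ?thesis unfolding S_def by blast
qed

definition C :: "int \<Rightarrow> m2" where "C x = M (Z 1 (-x)) (Z x 0) (Z (2*x) 0) (Z 1 x)"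

lemma C_add: "C x * C y = C (x + y)"
  by (simp add: C_def algebra_simps)
lemma C_pow: "C x ^ k = C (int k * x)"
  by (induct k) (simp_all add: C_add algebra_simps, simp add: C_def m2_zero_one zz_01)

lemma e8: "adj g1 * g5 * adj g1 * g5 = E (Z (-8) 0)"
  by (simp add: g1_def g5_def E_def zz_01)
lemma c4: "adj g2 * g6 = C (-4)"
  by (simp add: g2_def g6_def C_def)
lemma f4: "g3 = F (Z (-4) 0)"
  by (simp add: g3_def F_def zz_01)

lemma mcE: "mc n (E (Z y 0)) (E (Z y' 0)) \<longleftrightarrow> n dvd y - y'"
  by (simp add: E_def zc_Z)
lemma mcF: "mc n (F (Z y 0)) (F (Z y' 0)) \<longleftrightarrow> n dvd y - y'"
  by (simp add: F_def zc_Z)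
lemma mcC: "n dvd y - y' \<Longrightarrow> mc n (C y) (C y')"
proof -
  assume "n dvd y - y'"
  moreover have "2*y - 2*y' = 2*(y-y')" "y' - y = -(y-y')" by auto
  ultimately have "n dvd 2*y - 2*y'" "n dvd y' - y" by (metis dvd_mult, metis dvd_minus_iff)
  then show ?thesis using \<open>n dvd y - y'\<close> by (simp add: C_def zc_Z)
qed

lemma coprime6: "coprime q 6 \<Longrightarrow> coprime (2::int) q \<and> coprime (3::int) q"
  by (metis coprime_commute coprime_mult_left_iff mult_2 numeral_Bit0 numeral_times_numeral one_plus_numeral semiring_norm(3) semiring_norm(5))

context
  fixes q Q :: int
  assumes q6: "coprime q 6" and qQ: "coprime Q q" and qpos: "q > 0" and Qpos: "Q > 0"
begin

lemma cop2: "coprime (2::int) q" and cop3: "coprime (3::int) q"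
  using coprime6[OF q6] by auto

lemma cop_pow2: "coprime (2^n * Q) q"
  using cop2 qQ by (simp add: coprime_mult_left_iff coprime_power_left_iff)

lemma SE: "E (Z x 0) \<in> S q Q"
proof (rule S_param[where h = "adj g1 * g5 * adj g1 * g5" and c = "-8" and P = "\<lambda>y. E (Z y 0)"])
  show "adj g1 * g5 * adj g1 * g5 \<in> G" using G_gens by (auto intro!: G_mult G_adj)
  show "(adj g1 * g5 * adj g1 * g5) ^ k = E (Z (int k * - 8) 0)" for k
    by (simp add: e8 E_pow of_nat_zz)
  show "Q dvd y \<Longrightarrow> mc Q (E (Z y 0)) 1" for y
    using mcE[of Q y 0] by (simp add: E_def m2_zero_one zz_01)
  show "q dvd y - y' \<Longrightarrow> mc q (E (Z y 0)) (E (Z y' 0))" for y y' using mcE by blast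
  show "coprime (- 8 * Q) q" using cop_pow2[of 3] by simp
qed (use qpos Qpos in auto)

lemma SF: "F (Z x 0) \<in> S q Q"
proof (rule S_param[where h = "g3" and c = "-4" and P = "\<lambda>y. F (Z y 0)"])
  show "g3 \<in> G" using G_gens by auto
  show "g3 ^ k = F (Z (int k * - 4) 0)" for k
    by (simp add: f4 F_pow of_nat_zz)
  show "Q dvd y \<Longrightarrow> mc Q (F (Z y 0)) 1" for y
    using mcF[of Q y 0] by (simp add: F_def m2_zero_one zz_01)
  show "q dvd y - y' \<Longrightarrow> mc q (F (Z y 0)) (F (Z y' 0))" for y y' using mcF by blast
  show "coprime (- 4 * Q) q" using cop_pow2[of 2] by simp
qed (use qpos Qpos in auto)

lemma SC: "C x \<in> S q Q"
proof (rule S_param[where h = "adj g2 * g6" and c = "-4" and P = "C"])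
  show "adj g2 * g6 \<in> G" using G_gens by (auto intro!: G_mult G_adj)
  show "(adj g2 * g6) ^ k = C (int k * - 4)" for k
    by (simp add: c4 C_pow)
  show "Q dvd y \<Longrightarrow> mc Q (C y) 1" for y
    using mcC[of Q y 0] by (simp add: C_def m2_zero_one zz_01)
  show "q dvd y - y' \<Longrightarrow> mc q (C y) (C y')" for y y' using mcC by blast
  show "coprime (- 4 * Q) q" using cop_pow2[of 2] by simp
qed (use qpos Qpos in auto)

definition "w = M 0 (-1) 1 0"
lemma w_eq: "w = E (Z (-1) 0) * F (Z 1 0) * E (Z (-1) 0)"
  by (simp add: w_def E_def F_def zz_01)
lemma Sw: "w \<in> S q Q" unfolding w_eq by (intro S_mult SE SF)


definition "winv = M 0 1 (-1) 0"
lemma winv_eq: "winv = E (Z 1 0) * F (Z (-1) 0) * E (Z 1 0)"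
  by (simp add: winv_def E_def F_def zz_01)
lemma Swinv: "winv \<in> S q Q" unfolding winv_eq by (intro S_mult SE SF)

lemma zcI: "a - c = q*ka \<Longrightarrow> b - d = q*kb \<Longrightarrow> zc q (Z a b) (Z c d)"
  by (auto simp: zc_Z)

lemma SFs3: "F (Z 0 3) \<in> S q Q"
proof -
  obtain t where t: "q dvd 2 * int t - 1" using exists_lin[OF cop2 qpos] by blast
  define u where "u = int t"
  obtain r where r: "2*u - 1 = q*r" using t unfolding u_def by (auto simp: dvd_def)
  define T where "T = C 2 * F (Z (-u) 0) * C 2 * (C (-1) * F (Z 1 0) * C (-1))"
  define Dl where "Dl = E (Z u 0) * F (Z (-2) 0) * E (Z u 0) * w"
  have TS: "T \<in> S q Q" unfolding T_def by (intro S_mult SE SF SC)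
  have DS: "Dl \<in> S q Q" unfolding Dl_def by (intro S_mult SE SF Sw)
  have T_eq: "T = F (Z 0 1) * (E (Z 2 0) * F (Z (-u) 0) * E (Z 2 0) * w) * F (Z 0 (-1))"
    by (simp add: T_def C_def E_def F_def w_def zz_01 algebra_simps)
  have P1: "E (Z 2 0) * F (Z (-u) 0) * E (Z 2 0) * w = M (Z (4-4*u) 0) (Z (2*u-1) 0) (Z (1-2*u) 0) (Z u 0)"
    by (simp add: E_def F_def w_def zz_01 algebra_simps)
  have P2: "Dl = M (Z (2*u-2*u*u) 0) (Z (2*u-1) 0) (Z (1-2*u) 0) (Z 2 0)"
    by (simp add: Dl_def E_def F_def w_def zz_01 algebra_simps)
  have f1: "zc q (Z (4-4*u) 0) (Z 2 0)"
  proof (rule zcI)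
    show "4-4*u - 2 = q*(-2*r)" using r by algebra
    show "(0::int) - 0 = q*0" by simp
  qed
  have f2: "zc q (Z (2*u-1) 0) (Z 0 0)"
  proof (rule zcI)
    show "2*u-1 - 0 = q*r" using r by algebra
    show "(0::int) - 0 = q*0" by simp
  qed
  have f3: "zc q (Z (1-2*u) 0) (Z 0 0)"
  proof (rule zcI)
    show "1-2*u - 0 = q*(-r)" using r by algebra
    show "(0::int) - 0 = q*0" by simp
  qed
  have f4: "zc q (Z (2*u-2*u*u) 0) (Z u 0)"
  proof (rule zcI)
    show "2*u-2*u*u - u = q*(-u*r)" using r by algebra
    show "(0::int) - 0 = q*0" by simp
  qed
  have f5: "zc q (Z (2*u) 0) (Z 1 0)"
  proof (rule zcI)
    show "2*u - 1 = q*r" using r by simp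
    show "(0::int) - 0 = q*0" by simp
  qed
  have f6: "zc q (Z 0 (4-2*u)) (Z 0 3)"
  proof (rule zcI)
    show "(0::int) - 0 = q*0" by simp
    show "4-2*u - 3 = q*(-r)" using r by algebra
  qed
  have m1: "mc q (M (Z (4-4*u) 0) (Z (2*u-1) 0) (Z (1-2*u) 0) (Z u 0)) (M (Z 2 0) 0 0 (Z u 0))"
    unfolding zz_01 mc.simps using f1 f2 f3 by simp
  have m2: "mc q Dl (M (Z u 0) 0 0 (Z 2 0))"
    unfolding P2 zz_01 mc.simps using f2 f3 f4 by simp
  have P3: "M (Z u 0) 0 0 (Z 2 0) * (F (Z 0 1) * M (Z 2 0) 0 0 (Z u 0) * F (Z 0 (-1)))
      = M (Z (2*u) 0) 0 (Z 0 (4-2*u)) (Z (2*u) 0)"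
    by (simp add: F_def zz_01 algebra_simps)
  have m3: "mc q (M (Z (2*u) 0) 0 (Z 0 (4-2*u)) (Z (2*u) 0)) (F (Z 0 3))"
    unfolding F_def zz_01 mc.simps using f5 f6 by simp
  have "mc q (Dl * T) (M (Z u 0) 0 0 (Z 2 0) * (F (Z 0 1) * M (Z 2 0) 0 0 (Z u 0) * F (Z 0 (-1))))"
    unfolding T_eq P1 by (intro mc_mult m2 m1 mc_refl)
  then have "mc q (Dl * T) (F (Z 0 3))" using m3 P3 mc_trans by metis
  then show ?thesis using S_cong S_mult DS TS by blast
qed

lemma SFs: "F (Z 0 y) \<in> S q Q"
proof -
  obtain t where t: "q dvd 3 * int t - y" using exists_lin[OF cop3 qpos] by blast
  have "F (Z 0 3) ^ t = F (Z 0 (3 * int t))" by (simp add: F_pow of_nat_zz mult.commute)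
  then have "F (Z 0 (3 * int t)) \<in> S q Q" using S_pow SFs3 by metis
  moreover have "mc q (F (Z 0 (3 * int t))) (F (Z 0 y))" using t by (simp add: F_def zc_Z)
  ultimately show ?thesis using S_cong by blast
qed

lemma SFall: "F x \<in> S q Q"
proof -
  obtain a b where x: "x = Z a b" by (cases x)
  have "F (Z a 0) * F (Z 0 b) = F x" by (simp add: F_add x)
  then show ?thesis using S_mult SF SFs by metis
qed

lemma SEall: "E x \<in> S q Q"
proof -
  have "w * F (-x) * winv = E x" by (cases x) (simp add: w_def winv_def E_def F_def zz_01)
  then show ?thesis using S_mult Sw Swinv SFall by metis
qed

lemma zc_witness: "x - y = m * z \<Longrightarrow> of_int n dvd z \<Longrightarrow> zc n x y"
  unfolding zc_def by (simp add: dvd_mult)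

lemma S_upper:
  assumes "zc q (g*d) 1"
  shows "M g b 0 d \<in> S q Q"
proof -
  have k: "of_int q dvd g*d - 1" using assms unfolding zc_def .
  have P: "E g * F (-d) * E g * w * E (d*b) =
     M (g*(2-g*d)) (g*(2-g*d)*(d*b) - (1 - g*d)) (1 - d*g) ((1-d*g)*(d*b) + d)"
    by (simp add: E_def F_def w_def algebra_simps)
  have "mc q (E g * F (-d) * E g * w * E (d*b)) (M g b 0 d)"
    unfolding P mc.simps
  proof (intro conjI)
    have "g*(2-g*d) - g = (-g) * (g*d - 1)" by (simp add: algebra_simps)
    then show "zc q (g*(2-g*d)) g" using zc_witness k by blast
    have "g*(2-g*d)*(d*b) - (1 - g*d) - b = (1-b*(g*d-1)) * (g*d - 1)" by (simp add: algebra_simps)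
    then show "zc q (g*(2-g*d)*(d*b) - (1 - g*d)) b" using zc_witness k by blast
    have "1 - d*g - 0 = (-1) * (g*d - 1)" by (simp add: algebra_simps)
    then show "zc q (1 - d*g) 0" using zc_witness k by blast
    have "(1-d*g)*(d*b) + d - d = (-d*b) * (g*d - 1)" by (simp add: algebra_simps)
    then show "zc q ((1-d*g)*(d*b) + d) d" using zc_witness k by blast
  qed
  then show ?thesis using S_cong S_mult SEall SFall Sw by meson
qed

fun nrm :: "zz \<Rightarrow> int" where "nrm (Z a b) = a^2 + 2*b^2"
fun m21 :: "m2 \<Rightarrow> zz" where "m21 (M a b c d) = c"

lemma nrm_mult: "nrm (x*y) = nrm x * nrm y"
  by (cases x; cases y) (simp add: power2_eq_square algebra_simps)
lemma nrm_nonneg: "nrm x \<ge> 0" by (cases x) simp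
lemma nrm_pos: "x \<noteq> 0 \<Longrightarrow> nrm x > 0"
  by (cases x) (auto simp: zz_01 add_pos_nonneg add_nonneg_pos)

lemma round_bound:
  fixes u n :: int assumes "n > 0"
  shows "4 * (u - n * ((2*u + n) div (2*n)))^2 \<le> n^2"
proof -
  define t where "t = (2*u + n) div (2*n)"
  define r where "r = (2*u + n) mod (2*n)"
  have e: "2*u + n = 2*n*t + r" unfolding t_def r_def by (metis div_mult_mod_eq mult.commute)
  have "0 \<le> r" "r < 2*n" using assms unfolding r_def by simp_all
  then have "2*n*t \<le> 2*u + n" "2*u + n < 2*n*t + 2*n" using e by linarith+
  then have "\<bar>2*(u - n*t)\<bar> \<le> \<bar>n\<bar>" using assms by (simp add: abs_le_iff algebra_simps)
  then have "(2*(u - n*t))^2 \<le> n^2" using abs_le_square_iff by blast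
  moreover have "(2*(u - n*t))^2 = 4*(u-n*t)^2" by (simp add: power2_eq_square algebra_simps)
  ultimately show ?thesis unfolding t_def by simp
qed

lemma zz_div:
  assumes "c \<noteq> 0" shows "\<exists>t. nrm (a - t*c) < nrm c"
proof -
  obtain c1 c2 where c: "c = Z c1 c2" by (cases c)
  define n where "n = nrm c"
  have n: "n > 0" using nrm_pos assms n_def by blast
  obtain u v where uv: "a * Z c1 (-c2) = Z u v" by (cases "a * Z c1 (-c2)")
  define t1 where "t1 = (2*u + n) div (2*n)"
  define t2 where "t2 = (2*v + n) div (2*n)"
  define t where "t = Z t1 t2"
  have cc: "c * Z c1 (-c2) = Z n 0" by (simp add: c n_def power2_eq_square)
  have "(a - t*c) * Z c1 (-c2) = a * Z c1 (-c2) - t * (c * Z c1 (-c2))"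
    by (simp add: algebra_simps)
  also have "\<dots> = Z u v - t * Z n 0" by (simp only: uv cc)
  also have "\<dots> = Z (u - n*t1) (v - n*t2)" by (simp add: t_def algebra_simps)
  finally have e: "nrm (a - t*c) * n = (u - n*t1)^2 + 2*(v - n*t2)^2"
    using nrm_mult[of "a - t*c" "Z c1 (-c2)"] by (simp add: n_def c)
  have b1: "4*(u - n*t1)^2 \<le> n^2" unfolding t1_def using round_bound n by blast
  have b2: "4*(v - n*t2)^2 \<le> n^2" unfolding t2_def using round_bound n by blast
  have "4 * (nrm (a - t*c) * n) < 4 * (n * n)" unfolding e using b1 b2 mult_pos_pos[OF n n]
    by (simp add: power2_eq_square)
  then have "nrm (a - t*c) < n" using n by (simp add: mult_less_cancel_right)
  then show ?thesis unfolding n_def by blast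
qed

lemma S_all_aux: "\<forall>A. nat (nrm (m21 A)) = N \<longrightarrow> zc q (det2 A) 1 \<longrightarrow> A \<in> S q Q"
proof (induct N rule: less_induct)
  case (less N)
  show ?case
  proof (intro allI impI)
    fix A assume AN: "nat (nrm (m21 A)) = N" and dA: "zc q (det2 A) 1"
    obtain a b c d where A: "A = M a b c d" by (cases A)
    show "A \<in> S q Q"
    proof (cases "c = 0")
      case True
      then show ?thesis using S_upper dA A by simp
    next
      case False
      obtain t where t: "nrm (a - t*c) < nrm c" using zz_div False by blast
      define A2 where "A2 = w * E (-t) * A"
      have A2: "A2 = M (-c) (-d) (a - t*c) (b - t*d)"
        by (simp add: A2_def A w_def E_def algebra_simps)
      have dA2: "det2 A2 = det2 A" unfolding A2_def det_mult by (simp add: w_def)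
      have "nat (nrm (a - t*c)) < nat (nrm c)" by (metis nat_less_eq_zless nrm_nonneg t)
      moreover have "nat (nrm (m21 A2)) < N" using AN A A2 calculation by simp
      ultimately have "A2 \<in> S q Q" using less[of "nat (nrm (m21 A2))"] dA dA2 by simp
      moreover have "E t * winv * A2 = A"
        by (simp add: A2_def A w_def winv_def E_def algebra_simps)
      ultimately show ?thesis using S_mult SEall Swinv by metis
    qed
  qed
qed

lemma Lm: "zc q (det2 A) 1 \<Longrightarrow> \<exists>g\<in>G. mc q g A \<and> mc Q g 1"
  using S_all_aux S_def by blast

end


lemma of_int_comm: "X * of_int n = of_int n * (X::m2)"
  by (cases X) (simp add: of_int_m2 algebra_simps)
lemma of_int_assoc: "of_int a * (of_int b * X) = of_int (a*b) * (X::m2)"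
  by (simp add: mult.assoc[symmetric])

fun tr :: "m2 \<Rightarrow> zz" where "tr (M a b c d) = a + d"

lemma sq_expand: "(1 + of_int c * Y)^2 = 1 + of_int (2*c) * Y + of_int (c*c) * (Y*Y :: m2)"
  by (cases Y) (simp add: power2_eq_square of_int_m2 m2_zero_one algebra_simps)
lemma cube_expand: "(1 + of_int c * Y)^3 =
   1 + of_int (3*c) * Y + of_int (3*c*c) * (Y*Y) + of_int (c*c*c) * (Y*Y*(Y::m2))"
  by (cases Y) (simp add: power3_eq_cube of_int_m2 m2_zero_one algebra_simps)
lemma det_affine: "det2 (1 + of_int c * X) = 1 + of_int c * tr X + of_int (c*c) * det2 X"
  by (cases X) (simp add: of_int_m2 m2_zero_one algebra_simps)
lemma prod_lin: "(1 + of_int c * P) * (1 + of_int c * P') =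
    1 + of_int c * (P + P') + of_int (c*c) * (P * (P'::m2))"
  by (cases P; cases P') (simp add: of_int_m2 m2_zero_one algebra_simps)

lemma mc_one_iff: "mc n g 1 \<longleftrightarrow> (\<exists>X. g = 1 + of_int n * X)"
  by (simp add: mc_iff_ex)

lemma mc_extra: "Mo dvd c \<Longrightarrow> mc Mo (X + of_int c * W) X"
proof -
  assume "Mo dvd c"
  then obtain k where "c = Mo * k" by (auto simp: dvd_def)
  then have "X + of_int c * W = X + of_int Mo * (of_int k * W)" by (simp add: of_int_assoc)
  then show ?thesis unfolding mc_iff_ex by blast
qed

lemma mc_affine: "mc m X Y \<Longrightarrow> mc (c*m) (1 + of_int c * X) (1 + of_int c * Y)"
proof -
  assume "mc m X Y"
  then obtain W where "X = Y + of_int m * W" unfolding mc_iff_ex by blast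
  then have "1 + of_int c * X = (1 + of_int c * Y) + of_int (c*m) * W"
    by (simp add: distrib_left of_int_assoc add.assoc)
  then show ?thesis unfolding mc_iff_ex by blast
qed

lemma mc_add_lin:
  assumes "Mo dvd c*c" "mc Mo g (1 + of_int c * P)" "mc Mo g' (1 + of_int c * P')"
  shows "mc Mo (g*g') (1 + of_int c * (P+P'))"
proof -
  have "mc Mo (g*g') ((1 + of_int c * P) * (1 + of_int c * P'))" using assms mc_mult by blast
  moreover have "mc Mo ((1 + of_int c * P) * (1 + of_int c * P')) (1 + of_int c * (P+P'))"
    unfolding prod_lin using mc_extra[OF assms(1)] by blast
  ultimately show ?thesis using mc_trans by blast
qed

lemma mc_pow_lin:
  assumes "Mo dvd c*c" "mc Mo g (1 + of_int c * P)"
  shows "mc Mo (g^e) (1 + of_int c * (of_int (int e) * P))"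
proof (induct e)
  case 0 then show ?case by simp
next
  case (Suc e)
  have "mc Mo (g * g^e) (1 + of_int c * (P + of_int (int e) * P))"
    using mc_add_lin[OF assms Suc] .
  moreover have "P + of_int (int e) * P = of_int (int (Suc e)) * P" by (simp add: algebra_simps)
  ultimately show ?case by simp
qed

lemma sq_lemma: assumes "mc n g 1" "2 dvd n" shows "mc (2*n) (g^2) 1"
proof -
  obtain X where X: "g = 1 + of_int n * X" using assms(1) mc_one_iff by blast
  obtain k where k: "n = 2*k" using assms(2) by (auto simp: dvd_def)
  have "g^2 = 1 + of_int (2*n) * (X + of_int k * (X*X))"
    unfolding X k by (cases X) (simp add: power2_eq_square of_int_m2 m2_zero_one algebra_simps)
  then show ?thesis unfolding mc_one_iff by blast
qed

lemma cube_lemma: assumes "mc n g 1" "3 dvd n" shows "mc (3*n) (g^3) 1"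
proof -
  obtain X where X: "g = 1 + of_int n * X" using assms(1) mc_one_iff by blast
  obtain k where k: "n = 3*k" using assms(2) by (auto simp: dvd_def)
  have "g^3 = 1 + of_int (3*n) * (X + of_int n * (X*X) + of_int (n*k) * (X*X*X))"
    unfolding X k by (cases X) (simp add: power3_eq_cube of_int_m2 m2_zero_one algebra_simps)
  then show ?thesis unfolding mc_one_iff by blast
qed

lemma pow2_iter: "mc 2 g 1 \<Longrightarrow> mc (2^(k+1)) (g^(2^k)) 1"
proof (induct k)
  case 0 then show ?case by simp
next
  case (Suc k)
  have "mc (2 * 2^(k+1)) ((g^(2^k))^2) 1" using sq_lemma[OF Suc(1)[OF Suc(2)]] by simp
  moreover have "(g^(2^k))^2 = g^(2^(Suc k))" by (simp only: power_Suc2 power_mult)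
  moreover have "(2::int) * 2^(k+1) = 2^(Suc k + 1)" by simp
  ultimately show ?case by simp
qed

lemma pow3_iter: "mc 3 g 1 \<Longrightarrow> mc (3^(k+1)) (g^(3^k)) 1"
proof (induct k)
  case 0 then show ?case by simp
next
  case (Suc k)
  have "mc (3 * 3^(k+1)) ((g^(3^k))^3) 1" using cube_lemma[OF Suc(1)[OF Suc(2)]] by simp
  moreover have "(g^(3^k))^3 = g^(3^(Suc k))" by (simp only: power_Suc2 power_mult)
  moreover have "(3::int) * 3^(k+1) = 3^(Suc k + 1)" by simp
  ultimately show ?case by simp
qed

lemma mc_one_pow: "mc n g 1 \<Longrightarrow> mc n (g^k) 1"
  using mc_pow[of n g 1 k] by simp

lemma pow_period: "mc n (g^N) 1 \<Longrightarrow> mc n (g^(N*j + r)) (g^r)"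
proof -
  assume "mc n (g^N) 1"
  then have "mc n ((g^N)^j * g^r) (1 * g^r)" using mc_one_pow mc_mult mc_refl by blast
  then show ?thesis by (simp add: power_add power_mult)
qed

definition Good :: "int \<Rightarrow> int \<Rightarrow> int \<Rightarrow> m2 \<Rightarrow> bool" where
  "Good Mo c Q P \<longleftrightarrow> (\<exists>g\<in>G. mc Mo g (1 + of_int c * P) \<and> mc Q g 1)"

lemma Good_add: "Mo dvd c*c \<Longrightarrow> Good Mo c Q P \<Longrightarrow> Good Mo c Q P' \<Longrightarrow> Good Mo c Q (P + P')"
  unfolding Good_def using mc_add_lin G_mult mc_mult[of Q _ 1 _ 1] by (metis mult_1)
lemma Good_pow: "Mo dvd c*c \<Longrightarrow> Good Mo c Q P \<Longrightarrow> Good Mo c Q (of_int (int e) * P)"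
  unfolding Good_def using mc_pow_lin G_pow mc_one_pow by metis

lemma prime2:
  assumes "h \<in> G" "mc 16 h (1 + of_int 8 * P)" "mc 3 h 1"
  shows "Good 16 8 (3^b) P"
proof -
  have "mc 8 h (1 + of_int 8 * P)" using mc_dvd[OF _ assms(2), of 8] by simp
  moreover have "mc 8 (1 + of_int 8 * P) 1" using mc_extra[of 8 8 1 P] by simp
  ultimately have h8: "mc 8 h 1" using mc_trans by blast
  have h16: "mc 16 (h^2) 1" using sq_lemma[OF h8] by simp
  have "odd ((3::nat)^b)" by simp
  then obtain j where j: "(3::nat)^b = 2*j + 1" by (rule oddE)
  have hb: "h^(3^b) = h^(2*j+1)" using j by simp
  have "mc 16 (h^(2*j+1)) h" using pow_period[OF h16, of j 1] unfolding power_one_right .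
  then have m1: "mc 16 (h^(3^b)) (1 + of_int 8 * P)" unfolding hb using assms(2) by (rule mc_trans)
  have "mc (3^(b+1)) (h^(3^b)) 1" using pow3_iter[OF assms(3)] .
  then have m2: "mc (3^b) (h^(3^b)) 1" using mc_dvd[of "3^b" "3^(b+1)"] by simp
  show ?thesis unfolding Good_def
    apply (rule bexI[where x="h^(3^b)"]) using m1 m2 G_pow[OF assms(1)] by auto
qed


lemma prime3:
  assumes "h \<in> G" "mc 9 h (1 + of_int 3 * P)"
  shows "Good 9 3 (2^a) P"
proof -
  have "mc 3 h (1 + of_int 3 * P)" using mc_dvd[OF _ assms(2), of 3] by simp
  moreover have "mc 3 (1 + of_int 3 * P) 1" using mc_extra[of 3 3 1 P] by simp
  ultimately have h3: "mc 3 h 1" using mc_trans by blast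
  have h9: "mc 9 (h^3) 1" using cube_lemma[OF h3] by simp
  obtain j where j: "(4::nat)^a = 3*j + 1"
  proof -
    have "(4::nat)^a mod 3 = ((4 mod 3)^a) mod 3" by (simp only: power_mod)
    then have e: "(4::nat)^a mod 3 = 1" by simp
    have "(4::nat)^a = 3 * ((4::nat)^a div 3) + (4::nat)^a mod 3" by simp
    then show ?thesis using that e by simp
  qed
  have hb: "h^(4^a) = h^(3*j+1)" using j by simp
  have "mc 9 (h^(3*j+1)) h" using pow_period[OF h9, of j 1] unfolding power_one_right .
  then have m1: "mc 9 (h^(4^a)) (1 + of_int 3 * P)" unfolding hb using assms(2) by (rule mc_trans)
  have "mc (2^(a+1)) (h^(2^a)) 1" using pow2_iter[OF G_mod2[OF assms(1)]] .
  then have m2: "mc (2^a) ((h^(2^a))^(2^a)) 1" using mc_dvd[of "2^a" "2^(a+1)"] mc_one_pow by simp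
  have e4: "(4::nat)^a = 2^a * 2^a" by (induct a) simp_all
  have "h^(4^a) = (h^(2^a))^(2^a)" by (simp only: e4 power_mult)
  then have m3: "mc (2^a) (h^(4^a)) 1" using m2 by simp
  show ?thesis unfolding Good_def
    apply (rule bexI[where x="h^(4^a)"]) using m1 m3 G_pow[OF assms(1)] by auto
qed


definition "hD1 = g1 * g3 * g5 * adj g1 * adj g3 * adj g5"
lemma hD1_val: "hD1 = M (Z (1417) (0)) (Z (576) (0)) (Z (-2064) (0)) (Z (-839) (0))"
  by (simp add: hD1_def g1_def g2_def g3_def g4_def g5_def g6_def g7_def)
lemma hD1_G: "hD1 \<in> G"
  unfolding hD1_def by (intro G_mult G_adj G_gens)

definition "hDs = g4 * g4 * g4 * g4"
lemma hDs_val: "hDs = M (Z (-239) (408)) (Z (-816) (0)) (Z (0) (-816)) (Z (1393) (-408))"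
  by (simp add: hDs_def g1_def g2_def g3_def g4_def g5_def g6_def g7_def)
lemma hDs_G: "hDs \<in> G"
  unfolding hDs_def by (intro G_mult G_adj G_gens)

definition "hEs = g1 * g1 * adj g3 * adj g4 * g7 * adj g1 * adj g4 * adj g1 * adj g4"
lemma hEs_val: "hEs = M (Z (-25631) (-25488)) (Z (-5664) (-16536)) (Z (32448) (32160)) (Z (7201) (20880))"
  by (simp add: hEs_def g1_def g2_def g3_def g4_def g5_def g6_def g7_def)
lemma hEs_G: "hEs \<in> G"
  unfolding hEs_def by (intro G_mult G_adj G_gens)

definition "hFs = g1 * g1 * g1 * adj g3 * adj g7 * g5 * adj g1 * adj g4 * g5"
lemma hFs_val: "hFs = M (Z (-1679) (-144)) (Z (4464) (-1104)) (Z (1968) (168)) (Z (-5231) (1296))"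
  by (simp add: hFs_def g1_def g2_def g3_def g4_def g5_def g6_def g7_def)
lemma hFs_G: "hFs \<in> G"
  unfolding hFs_def by (intro G_mult G_adj G_gens)

definition "kF1 = adj g3 * adj g3 * adj g3"
lemma kF1_val: "kF1 = M (Z (1) (0)) (Z (0) (0)) (Z (12) (0)) (Z (1) (0))"
  by (simp add: kF1_def g1_def g2_def g3_def g4_def g5_def g6_def g7_def)
lemma kF1_G: "kF1 \<in> G"
  unfolding kF1_def by (intro G_mult G_adj G_gens)

definition "kD1 = g1 * g5 * adj g3 * g5"
lemma kD1_val: "kD1 = M (Z (13) (0)) (Z (-18) (0)) (Z (-18) (0)) (Z (25) (0))"
  by (simp add: kD1_def g1_def g2_def g3_def g4_def g5_def g6_def g7_def)
lemma kD1_G: "kD1 \<in> G"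
  unfolding kD1_def by (intro G_mult G_adj G_gens)

definition "kE1 = g1 * g3 * g3 * g3 * adj g1"
lemma kE1_val: "kE1 = M (Z (73) (0)) (Z (48) (0)) (Z (-108) (0)) (Z (-71) (0))"
  by (simp add: kE1_def g1_def g2_def g3_def g4_def g5_def g6_def g7_def)
lemma kE1_G: "kE1 \<in> G"
  unfolding kE1_def by (intro G_mult G_adj G_gens)

definition "kEs = g1 * g2 * g1 * g6 * adj g4 * adj g6"
lemma kEs_val: "kEs = M (Z (-4949) (216)) (Z (-1602) (-564)) (Z (6930) (-756)) (Z (2359) (648))"
  by (simp add: kEs_def g1_def g2_def g3_def g4_def g5_def g6_def g7_def)
lemma kEs_G: "kEs \<in> G"
  unfolding kEs_def by (intro G_mult G_adj G_gens)

definition "kFs = g1 * g2 * g5 * adj g4 * adj g2 * adj g7"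
lemma kFs_val: "kFs = M (Z (-1565) (3888)) (Z (-1368) (1440)) (Z (1512) (-5640)) (Z (1675) (-2160))"
  by (simp add: kFs_def g1_def g2_def g3_def g4_def g5_def g6_def g7_def)
lemma kFs_G: "kFs \<in> G"
  unfolding kFs_def by (intro G_mult G_adj G_gens)

definition "kDs = g1 * g4 * adj g6 * adj g3 * adj g4 * g6"
lemma kDs_val: "kDs = M (Z (-1223) (-744)) (Z (1026) (-504)) (Z (1746) (936)) (Z (-1331) (744))"
  by (simp add: kDs_def g1_def g2_def g3_def g4_def g5_def g6_def g7_def)
lemma kDs_G: "kDs \<in> G"
  unfolding kDs_def by (intro G_mult G_adj G_gens)

definition "w1 = g1 * g1 * g1 * g5 * g5"
lemma w1_val: "w1 = M (Z (-47) (0)) (Z (114) (0)) (Z (54) (0)) (Z (-131) (0))"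
  by (simp add: w1_def g1_def g2_def g3_def g4_def g5_def g6_def g7_def)
lemma w1_G: "w1 \<in> G"
  unfolding w1_def by (intro G_mult G_adj G_gens)

definition "w2 = adj g1 * adj g1 * g4 * adj g2 * g4"
lemma w2_val: "w2 = M (Z (-23) (-18)) (Z (18) (-24)) (Z (18) (12)) (Z (-11) (18))"
  by (simp add: w2_def g1_def g2_def g3_def g4_def g5_def g6_def g7_def)
lemma w2_G: "w2 \<in> G"
  unfolding w2_def by (intro G_mult G_adj G_gens)

definition "w3 = g3 * g3 * g3"
lemma w3_val: "w3 = M (Z (1) (0)) (Z (0) (0)) (Z (-12) (0)) (Z (1) (0))"
  by (simp add: w3_def g1_def g2_def g3_def g4_def g5_def g6_def g7_def)
lemma w3_G: "w3 \<in> G"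
  unfolding w3_def by (intro G_mult G_adj G_gens)

definition "w4 = g3 * g4 * adj g7 * adj g4"
lemma w4_val: "w4 = M (Z (103) (-30)) (Z (60) (0)) (Z (-576) (228)) (Z (-353) (30))"
  by (simp add: w4_def g1_def g2_def g3_def g4_def g5_def g6_def g7_def)
lemma w4_G: "w4 \<in> G"
  unfolding w4_def by (intro G_mult G_adj G_gens)

definition "w5 = g1 * g1 * adj g3 * adj g5 * adj g3"
lemma w5_val: "w5 = M (Z (271) (0)) (Z (42) (0)) (Z (-342) (0)) (Z (-53) (0))"
  by (simp add: w5_def g1_def g2_def g3_def g4_def g5_def g6_def g7_def)
lemma w5_G: "w5 \<in> G"
  unfolding w5_def by (intro G_mult G_adj G_gens)

definition "w6 = g1 * g1 * adj g7 * adj g6 * adj g7"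
lemma w6_val: "w6 = M (Z (-2687) (-630)) (Z (-978) (-504)) (Z (3498) (756)) (Z (1285) (630))"
  by (simp add: w6_def g1_def g2_def g3_def g4_def g5_def g6_def g7_def)
lemma w6_G: "w6 \<in> G"
  unfolding w6_def by (intro G_mult G_adj G_gens)

definition "w7 = adj g7 * adj g7 * adj g7"
lemma w7_val: "w7 = M (Z (-881) (198)) (Z (-396) (0)) (Z (-396) (-396)) (Z (-89) (-198))"
  by (simp add: w7_def g1_def g2_def g3_def g4_def g5_def g6_def g7_def)
lemma w7_G: "w7 \<in> G"
  unfolding w7_def by (intro G_mult G_adj G_gens)


definition "PD1 = (1::m2)"
definition "PDs = M (Z 0 1) 0 0 (Z 0 1)"
definition "PE1 = M 0 1 0 0"
definition "PEs = M 0 (Z 0 1) 0 0"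
definition "PF1 = M 0 0 1 0"
definition "PFs = M 0 0 (Z 0 1) 0"
definition "QD1 = M 1 0 0 (-1)"
definition "QDs = M (Z 0 1) 0 0 (Z 0 (-1))"

lemma hE1_G: "E (Z 24 0) \<in> G"
proof -
  have "adj (adj g1 * g5 * adj g1 * g5) \<in> G" using G_gens by (intro G_adj G_mult)
  moreover have "adj (adj g1 * g5 * adj g1 * g5) = E (Z 8 0)" unfolding e8 by (simp add: E_def zz_01)
  ultimately have "E (Z 8 0) ^ 3 \<in> G" using G_pow by metis
  moreover have "E (Z 8 0) ^ 3 = E (Z 24 0)" by (simp add: E_pow of_nat_zz)
  ultimately show ?thesis by simp
qed

lemma hF1_G: "F (Z 24 0) \<in> G"
proof -
  have "adj g3 \<in> G" using G_gens by (intro G_adj)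
  moreover have "adj g3 = F (Z 4 0)" by (simp add: g3_def F_def zz_01)
  ultimately have "F (Z 4 0) ^ 6 \<in> G" using G_pow by metis
  moreover have "F (Z 4 0) ^ 6 = F (Z 24 0)" by (simp add: F_pow of_nat_zz)
  ultimately show ?thesis by simp
qed

lemma c16:
  "mc 16 hD1 (1 + of_int 8 * PD1)" "mc 3 hD1 1"
  "mc 16 hDs (1 + of_int 8 * PDs)" "mc 3 hDs 1"
  "mc 16 (E (Z 24 0)) (1 + of_int 8 * PE1)" "mc 3 (E (Z 24 0)) 1"
  "mc 16 hEs (1 + of_int 8 * PEs)" "mc 3 hEs 1"
  "mc 16 (F (Z 24 0)) (1 + of_int 8 * PF1)" "mc 3 (F (Z 24 0)) 1"
  "mc 16 hFs (1 + of_int 8 * PFs)" "mc 3 hFs 1"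
  by (simp_all add: hD1_val hDs_val hEs_val hFs_val E_def F_def PD1_def PDs_def PE1_def PEs_def PF1_def PFs_def
      zc_Z of_int_m2 m2_zero_one of_int_zz zz_01 dvd_eq_mod_eq_0)

lemma c9:
  "mc 9 kD1 (1 + of_int 3 * QD1)"
  "mc 9 kDs (1 + of_int 3 * QDs)"
  "mc 9 kE1 (1 + of_int 3 * PE1)"
  "mc 9 kEs (1 + of_int 3 * PEs)"
  "mc 9 kF1 (1 + of_int 3 * PF1)"
  "mc 9 kFs (1 + of_int 3 * PFs)"
  by (simp_all add: kD1_val kDs_val kE1_val kEs_val kF1_val kFs_val QD1_def QDs_def PE1_def PEs_def PF1_def PFs_def
      zc_Z of_int_m2 m2_zero_one of_int_zz zz_01 dvd_eq_mod_eq_0)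

lemma dvd16: "(16::int) dvd 8*s + 64*d \<Longrightarrow> 2 dvd s" by presburger
lemma dvd9: "(9::int) dvd 3*s + 9*d \<Longrightarrow> 3 dvd s" by presburger

lemma K2_base:
  assumes "mc 8 A 1" "zc 16 (det2 A) 1"
  shows "\<exists>g\<in>G. mc 16 g A \<and> mc (3^b) g 1"
proof -
  obtain X where X: "A = 1 + of_int 8 * X" using assms(1) mc_one_iff by blast
  obtain x1 x2 x3 x4 x5 x6 x7 x8 where Xe: "X = M (Z x1 x2) (Z x3 x4) (Z x5 x6) (Z x7 x8)"
    by (metis m2.exhaust zz.exhaust)
  obtain d1 d2 where dX: "det2 X = Z d1 d2" by (metis zz.exhaust)
  have "det2 A = Z (1 + 8*(x1+x7) + 64*d1) (8*(x2+x8) + 64*d2)"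
    unfolding X det_affine dX by (simp add: Xe of_int_zz zz_01)
  then have "16 dvd 8*(x1+x7) + 64*d1" "16 dvd 8*(x2+x8) + 64*d2"
    using assms(2) by (simp_all add: zc_Z zz_01 algebra_simps)
  then have t1: "2 dvd x1 + x7" and t2: "2 dvd x2 + x8" using dvd16 by blast+
  define B where "B = M (Z (x1 mod 2) (x2 mod 2)) (Z (x3 mod 2) (x4 mod 2)) (Z (x5 mod 2) (x6 mod 2)) (Z (x1 mod 2) (x2 mod 2))"
  have "mc 2 X B" unfolding Xe B_def using t1 t2 by (simp add: zc_Z; presburger)
  then have AB: "mc 16 A (1 + of_int 8 * B)" unfolding X using mc_affine[of 2 X B 8] by simp
  have d: "(16::int) dvd 8*8" by simp
  have "Good 16 8 (3^b) (of_int (int (nat (x1 mod 2))) * PD1 + of_int (int (nat (x2 mod 2))) * PDs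
     + of_int (int (nat (x3 mod 2))) * PE1 + of_int (int (nat (x4 mod 2))) * PEs
     + of_int (int (nat (x5 mod 2))) * PF1 + of_int (int (nat (x6 mod 2))) * PFs)"
    by (intro Good_add[OF d] Good_pow[OF d] prime2[OF hD1_G c16(1,2)] prime2[OF hDs_G c16(3,4)]
        prime2[OF hE1_G c16(5,6)] prime2[OF hEs_G c16(7,8)] prime2[OF hF1_G c16(9,10)] prime2[OF hFs_G c16(11,12)])
  moreover have "of_int (int (nat (x1 mod 2))) * PD1 + of_int (int (nat (x2 mod 2))) * PDs
     + of_int (int (nat (x3 mod 2))) * PE1 + of_int (int (nat (x4 mod 2))) * PEs
     + of_int (int (nat (x5 mod 2))) * PF1 + of_int (int (nat (x6 mod 2))) * PFs = B"
    by (simp add: B_def PD1_def PDs_def PE1_def PEs_def PF1_def PFs_def of_int_m2 m2_zero_one of_int_zz zz_01)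
  ultimately obtain g where "g \<in> G" "mc 16 g (1 + of_int 8 * B)" "mc (3^b) g 1"
    unfolding Good_def by auto
  then show ?thesis using AB mc_trans mc_sym by blast
qed

lemma K3_base:
  assumes "mc 3 A 1" "zc 9 (det2 A) 1"
  shows "\<exists>g\<in>G. mc 9 g A \<and> mc (2^a) g 1"
proof -
  obtain X where X: "A = 1 + of_int 3 * X" using assms(1) mc_one_iff by blast
  obtain x1 x2 x3 x4 x5 x6 x7 x8 where Xe: "X = M (Z x1 x2) (Z x3 x4) (Z x5 x6) (Z x7 x8)"
    by (metis m2.exhaust zz.exhaust)
  obtain d1 d2 where dX: "det2 X = Z d1 d2" by (metis zz.exhaust)
  have "det2 A = Z (1 + 3*(x1+x7) + 9*d1) (3*(x2+x8) + 9*d2)"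
    unfolding X det_affine dX by (simp add: Xe of_int_zz zz_01)
  then have "9 dvd 3*(x1+x7) + 9*d1" "9 dvd 3*(x2+x8) + 9*d2"
    using assms(2) by (simp_all add: zc_Z zz_01 algebra_simps)
  then have t1: "3 dvd x1 + x7" and t2: "3 dvd x2 + x8" using dvd9 by blast+
  define B where "B = M (Z (x1 mod 3) (x2 mod 3)) (Z (x3 mod 3) (x4 mod 3)) (Z (x5 mod 3) (x6 mod 3)) (Z (-(x1 mod 3)) (-(x2 mod 3)))"
  have "mc 3 X B" unfolding Xe B_def using t1 t2 by (simp add: zc_Z; presburger)
  then have AB: "mc 9 A (1 + of_int 3 * B)" unfolding X using mc_affine[of 3 X B 3] by simp
  have d: "(9::int) dvd 3*3" by simp
  have "Good 9 3 (2^a) (of_int (int (nat (x1 mod 3))) * QD1 + of_int (int (nat (x2 mod 3))) * QDs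
     + of_int (int (nat (x3 mod 3))) * PE1 + of_int (int (nat (x4 mod 3))) * PEs
     + of_int (int (nat (x5 mod 3))) * PF1 + of_int (int (nat (x6 mod 3))) * PFs)"
    by (intro Good_add[OF d] Good_pow[OF d] prime3[OF kD1_G c9(1)] prime3[OF kDs_G c9(2)]
        prime3[OF kE1_G c9(3)] prime3[OF kEs_G c9(4)] prime3[OF kF1_G c9(5)] prime3[OF kFs_G c9(6)])
  moreover have "of_int (int (nat (x1 mod 3))) * QD1 + of_int (int (nat (x2 mod 3))) * QDs
     + of_int (int (nat (x3 mod 3))) * PE1 + of_int (int (nat (x4 mod 3))) * PEs
     + of_int (int (nat (x5 mod 3))) * PF1 + of_int (int (nat (x6 mod 3))) * PFs = B"
    by (simp add: B_def QD1_def QDs_def PE1_def PEs_def PF1_def PFs_def of_int_m2 m2_zero_one of_int_zz zz_01)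
  ultimately obtain g where "g \<in> G" "mc 9 g (1 + of_int 3 * B)" "mc (2^a) g 1"
    unfolding Good_def by auto
  then show ?thesis using AB mc_trans mc_sym by blast
qed


lemma cancel_dvd:
  fixes N p t d :: int
  assumes "N \<noteq> 0" "p dvd N" "p*N dvd N*t + N*N*d"
  shows "p dvd t"
proof -
  have "N*p dvd N*(t + N*d)" using assms(3) by (simp add: algebra_simps)
  then have "p dvd t + N*d" using assms(1) by simp
  moreover have "p dvd N*d" using assms(2) by simp
  ultimately show ?thesis by (metis add_diff_cancel_right' dvd_diff)
qed

lemma det_coords:
  assumes "tr X = Z t1 t2" "det2 X = Z d1 d2"
  shows "det2 (1 + of_int c * X) = Z (1 + c*t1 + c*c*d1) (c*t2 + c*c*d2)"
  unfolding det_affine assms by (simp add: of_int_zz zz_01)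

lemma sq_step_id:
  assumes "c = 4*e"
  shows "((1 + of_int c * X) + of_int (2*c) * (Y::m2))^2 =
     (1 + of_int (2*c) * X) + of_int (4*c) * (Y + of_int e * ((X + Y + Y)*(X + Y + Y)))"
  unfolding assms by (cases X; cases Y) (simp add: power2_eq_square of_int_m2 m2_zero_one algebra_simps)

lemma cube_step_id:
  assumes "c = 3*e"
  shows "((1 + of_int c * X) + of_int (3*c) * (Y::m2))^3 =
     (1 + of_int (3*c) * X) + of_int (9*c) * (Y + of_int e * ((X + Y + Y + Y)*(X + Y + Y + Y))
        + of_int (e*e) * ((X + Y + Y + Y)*(X + Y + Y + Y)*(X + Y + Y + Y)))"
  unfolding assms by (cases X; cases Y) (simp add: power3_eq_cube of_int_m2 m2_zero_one algebra_simps)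

lemma K_step:
  fixes p N c e Q L :: int
  assumes IH: "\<And>A. mc L A 1 \<Longrightarrow> zc N (det2 A) 1 \<Longrightarrow> \<exists>g\<in>G. mc N g A \<and> mc Q g 1"
    and N: "N = p * c" and ce: "(p = 2 \<and> c = 4*e) \<or> (p = 3 \<and> c = 3*e)" and Lc: "L dvd c" and e: "e \<noteq> 0"
    and A: "mc L A 1" "zc (p*N) (det2 A) 1"
  shows "\<exists>g\<in>G. mc (p*N) g A \<and> mc Q g 1"
proof -
  have Nz: "N \<noteq> 0" "c \<noteq> 0" using N ce e by auto
  have pc: "p dvd c" using ce by auto
  have "zc N (det2 A) 1" using A(2) zc_dvd[of N "p*N"] by simp
  then obtain g0 where g0: "g0 \<in> G" "mc N g0 A" "mc Q g0 1" using IH A(1) by blast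
  define B where "B = A * adj g0"
  have "mc N B (g0 * adj g0)" unfolding B_def using g0(2) mc_sym mc_mult mc_refl by blast
  then have "mc N B 1" using G_inv(1)[OF g0(1)] by simp
  then obtain X where X: "B = 1 + of_int N * X" using mc_one_iff by blast
  have dB: "det2 B = det2 A" unfolding B_def det_mult det_adj G_det[OF g0(1)] by simp
  obtain t1 t2 where t: "tr X = Z t1 t2" by (metis zz.exhaust)
  obtain d1 d2 where d: "det2 X = Z d1 d2" by (metis zz.exhaust)
  have "zc (p*N) (Z (1 + N*t1 + N*N*d1) (N*t2 + N*N*d2)) (Z 1 0)"
    using A(2) dB det_coords[OF t d, of N] X by (simp add: zz_01)
  then have h1: "p*N dvd N*t1 + N*N*d1" and h2: "p*N dvd N*t2 + N*N*d2" by (simp_all add: zc_Z)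
  have pN: "p dvd N" unfolding N by simp
  have pt: "p dvd t1" "p dvd t2" using cancel_dvd[OF Nz(1) pN h1] cancel_dvd[OF Nz(1) pN h2] by auto
  define B' where "B' = 1 + of_int c * X"
  have B'L: "mc L B' 1" unfolding B'_def using mc_extra[OF Lc, of 1 X] by simp
  have "p * c dvd c*t1 + c*c*d1" "p * c dvd c*t2 + c*c*d2"
    using pt pc by (auto intro!: dvd_add simp: mult.assoc)
  then have "zc N (Z (1 + c*t1 + c*c*d1) (c*t2 + c*c*d2)) (Z 1 0)"
    unfolding N by (simp add: zc_Z algebra_simps)
  then have "zc N (det2 B') 1" unfolding B'_def det_coords[OF t d] by (simp add: zz_01)
  then obtain g1 where g1: "g1 \<in> G" "mc N g1 B'" "mc Q g1 1" using IH B'L by blast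
  obtain Y where Y: "g1 = B' + of_int N * Y" using g1(2) mc_iff_ex by blast
  have "\<exists>W. g1 ^ (nat p) = B + of_int (p*N) * W"
  proof (cases "p = 2")
    case True
    have c4: "c = 4*e" using ce True by auto
    have "g1^2 = (1 + of_int (2*c) * X) + of_int (4*c) * (Y + of_int e * ((X + Y + Y)*(X + Y + Y)))"
      unfolding Y B'_def N True by (rule sq_step_id[OF c4])
    then show ?thesis unfolding X N True
      by (intro exI[where x="Y + of_int e * ((X + Y + Y)*(X + Y + Y))"]) simp
  next
    case False
    then have p3: "p = 3" and c3: "c = 3*e" using ce by auto
    have "g1^3 = (1 + of_int (3*c) * X) + of_int (9*c) * (Y + of_int e * ((X + Y + Y + Y)*(X + Y + Y + Y))
        + of_int (e*e) * ((X + Y + Y + Y)*(X + Y + Y + Y)*(X + Y + Y + Y)))"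
      unfolding Y B'_def N p3 by (rule cube_step_id[OF c3])
    then show ?thesis unfolding X N p3
      by (intro exI[where x="Y + of_int e * ((X + Y + Y + Y)*(X + Y + Y + Y))
        + of_int (e*e) * ((X + Y + Y + Y)*(X + Y + Y + Y)*(X + Y + Y + Y))"]) simp
  qed
  then have m1: "mc (p*N) (g1 ^ (nat p)) B" unfolding mc_iff_ex by blast
  have "mc (p*N) (g1 ^ (nat p) * g0) (B * g0)" using mc_mult[OF m1 mc_refl] .
  moreover have "B * g0 = A" unfolding B_def using G_inv(2)[OF g0(1)] by (simp add: mult.assoc)
  moreover have "mc Q (g1 ^ (nat p) * g0) 1" using mc_mult[OF mc_one_pow[OF g1(3)] g0(3)] by simp
  moreover have "g1 ^ (nat p) * g0 \<in> G" using G_mult G_pow g1(1) g0(1) by blast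
  ultimately show ?thesis by auto
qed

lemma K2_aux: "\<forall>A. mc 8 A 1 \<longrightarrow> zc (2^(k+4)) (det2 A) 1 \<longrightarrow> (\<exists>g\<in>G. mc (2^(k+4)) g A \<and> mc (3^b) g 1)"
proof (induct k)
  case 0 then show ?case using K2_base by simp
next
  case (Suc k)
  show ?case
  proof (intro allI impI)
    fix A :: m2 assume A: "mc 8 A 1" "zc (2^(Suc k+4)) (det2 A) 1"
    have "\<exists>g\<in>G. mc (2 * 2^(k+4)) g A \<and> mc (3^b) g 1"
    proof (rule K_step[where L=8 and c="2^(k+3)" and e="2^(k+1)" and p=2])
      show "mc 8 A 1" using A(1) .
      have "(2::int)^(Suc k+4) = 2 * 2^(k+4)" by (simp add: power_add)
      then show "zc (2 * 2^(k+4)) (det2 A) 1" using A(2) by simp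
      show "(8::int) dvd 2^(k+3)" by (simp add: power_add)
    qed (use Suc in \<open>auto simp: power_add\<close>)
    moreover have "(2::int)^(Suc k+4) = 2 * 2^(k+4)" by (simp add: power_add)
    ultimately show "\<exists>g\<in>G. mc (2^(Suc k+4)) g A \<and> mc (3^b) g 1" by simp
  qed
qed

lemma K3_aux: "\<forall>A. mc 3 A 1 \<longrightarrow> zc (3^(k+2)) (det2 A) 1 \<longrightarrow> (\<exists>g\<in>G. mc (3^(k+2)) g A \<and> mc (2^a) g 1)"
proof (induct k)
  case 0 then show ?case using K3_base by simp
next
  case (Suc k)
  show ?case
  proof (intro allI impI)
    fix A :: m2 assume A: "mc 3 A 1" "zc (3^(Suc k+2)) (det2 A) 1"
    have "\<exists>g\<in>G. mc (3 * 3^(k+2)) g A \<and> mc (2^a) g 1"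
    proof (rule K_step[where L=3 and c="3^(k+1)" and e="3^k" and p=3])
      show "mc 3 A 1" using A(1) .
      have "(3::int)^(Suc k+2) = 3 * 3^(k+2)" by (simp add: power_add)
      then show "zc (3 * 3^(k+2)) (det2 A) 1" using A(2) by simp
    qed (use Suc in \<open>auto simp: power_add\<close>)
    moreover have "(3::int)^(Suc k+2) = 3 * 3^(k+2)" by (simp add: power_add)
    ultimately show "\<exists>g\<in>G. mc (3^(Suc k+2)) g A \<and> mc (2^a) g 1" by simp
  qed
qed

lemma K2: "4 \<le> l \<Longrightarrow> mc 8 A 1 \<Longrightarrow> zc (2^l) (det2 A) 1 \<Longrightarrow> \<exists>g\<in>G. mc (2^l) g A \<and> mc (3^b) g 1"
  using K2_aux[of "l-4" b] by simp
lemma K3: assumes "2 \<le> l" "mc 3 A 1" "zc (3^l) (det2 A) 1"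
  shows "\<exists>g\<in>G. mc (3^l) g A \<and> mc (2^a) g 1"
proof -
  obtain k where "l = k + 2" using assms(1) by (metis le_add_diff_inverse2)
  then show ?thesis using K3_aux[of k a] assms(2,3) by blast
qed


lemma wcong:
  "mc 8 w1 g1" "mc 3 w1 1" "mc 8 w2 g2" "mc 3 w2 1" "mc 8 w3 g3" "mc 3 w3 1"
  "mc 8 w4 g4" "mc 3 w4 1" "mc 8 w5 g5" "mc 3 w5 1" "mc 8 w6 g6" "mc 3 w6 1"
  "mc 8 w7 g7" "mc 3 w7 1"
  by (simp_all add: w1_val w2_val w3_val w4_val w5_val w6_val w7_val
      g1_def g2_def g3_def g4_def g5_def g6_def g7_def zc_Z of_int_m2 m2_zero_one of_int_zz zz_01 dvd_eq_mod_eq_0)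

lemma gen_case:
  assumes x: "x \<in> G" and v: "v \<in> G" "mc 8 v x" "mc 3 v 1"
  shows "\<exists>h\<in>G. mc (2^a) h x \<and> mc (3^b) h 1"
proof -
  have cop: "coprime ((3::int)^b) (2^(a+3))" by simp
  obtain t where t: "(2::int)^(a+3) dvd 3^b * int t - 1" using exists_lin[OF cop] by auto
  then obtain m where m: "3^b * int t - 1 = 2^(a+3) * m" by (auto simp: dvd_def)
  have "t \<noteq> 0"
  proof
    assume "t = 0"
    then have "-1 = 2^(a+3) * m" using m by simp
    moreover have "(2::int) dvd 2^(a+3)" by simp
    ultimately have "(2::int) dvd -1" by (metis dvd_mult2)
    then show False by simp
  qed
  then have "(3::int)^b * int t \<ge> 1 * 1" by (intro mult_mono) auto
  then have "(3::int)^b * int t \<ge> 1" by simp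
  then have "2^(a+3) * m \<ge> 0" using m by simp
  then have m0: "m \<ge> 0" by (simp add: zero_le_mult_iff)
  define K where "K = 3^b * t"
  have "int K = int (2^(a+3) * nat m + 1)" using m m0 unfolding K_def by simp
  then have K: "K = 2^(a+3) * nat m + 1" by (simp only: of_nat_eq_iff)
  define v' where "v' = v ^ K"
  have v'G: "v' \<in> G" unfolding v'_def using G_pow v(1) by blast
  have "mc (2^(a+3+1)) (v^(2^(a+3))) 1" using pow2_iter[OF G_mod2[OF v(1)]] .
  moreover have "a + 3 + 1 = a + 4" by simp
  ultimately have p1: "mc (2^(a+4)) (v^(2^(a+3))) 1" by metis
  have "mc (2^(a+4)) (v^(2^(a+3) * nat m + 1)) (v^1)" by (rule pow_period[OF p1])
  then have v'2: "mc (2^(a+4)) v' v" unfolding v'_def K power_one_right .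
  have "mc (3^(b+1)) (v^(3^b)) 1" using pow3_iter[OF v(3)] .
  then have v'3: "mc (3^(b+1)) v' 1" unfolding v'_def K_def power_mult using mc_one_pow by blast
  have "mc 8 v' v" using mc_dvd[OF _ v'2, of 8] by (simp add: power_add)
  then have v'8: "mc 8 v' x" using v(2) mc_trans by blast
  define B where "B = x * adj v'"
  have "mc 8 B (x * adj x)" unfolding B_def using mc_mult[OF mc_refl mc_adj[OF v'8]] .
  then have B8: "mc 8 B 1" using G_inv(1)[OF x] by simp
  have "det2 B = 1" unfolding B_def det_mult det_adj using G_det x v'G by simp
  then have "zc (2^(a+4)) (det2 B) 1" by simp
  then obtain h0 where h0: "h0 \<in> G" "mc (2^(a+4)) h0 B" "mc (3^(b+1)) h0 1"
    using K2[of "a+4" B "b+1"] B8 by auto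
  define h where "h = h0 * v'"
  have "B * v' = x" unfolding B_def using G_inv(2)[OF v'G] by (simp add: mult.assoc)
  then have "mc (2^(a+4)) h x" unfolding h_def using mc_mult[OF h0(2) mc_refl[of _ v']] by simp
  then have "mc (2^a) h x" using mc_dvd[of "2^a" "2^(a+4)"] by (simp add: power_add)
  moreover have "mc (3^(b+1)) h 1" unfolding h_def using mc_mult[OF h0(3) v'3] by simp
  then have "mc (3^b) h 1" using mc_dvd[of "3^b" "3^(b+1)"] by simp
  moreover have "h \<in> G" unfolding h_def using G_mult h0(1) v'G by blast
  ultimately show ?thesis by blast
qed

lemma Mix: "g \<in> G \<Longrightarrow> \<exists>h\<in>G. mc (2^a) h g \<and> mc (3^b) h 1"
proof (induct rule: G_induct)
  case one then show ?case using G_one by force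
next
  case g1 then show ?case using gen_case[OF _ w1_G wcong(1,2)] G_gens by blast
next
  case g2 then show ?case using gen_case[OF _ w2_G wcong(3,4)] G_gens by blast
next
  case g3 then show ?case using gen_case[OF _ w3_G wcong(5,6)] G_gens by blast
next
  case g4 then show ?case using gen_case[OF _ w4_G wcong(7,8)] G_gens by blast
next
  case g5 then show ?case using gen_case[OF _ w5_G wcong(9,10)] G_gens by blast
next
  case g6 then show ?case using gen_case[OF _ w6_G wcong(11,12)] G_gens by blast
next
  case g7 then show ?case using gen_case[OF _ w7_G wcong(13,14)] G_gens by blast
next
  case (mult x y)
  then obtain h1 h2 where "h1 \<in> G" "mc (2^a) h1 x" "mc (3^b) h1 1"
    "h2 \<in> G" "mc (2^a) h2 y" "mc (3^b) h2 1" by blast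
  then show ?case using G_mult mc_mult[of "2^a" h1 x h2 y] mc_mult[of "3^b" h1 1 h2 1] by (metis mult_1)
next
  case (adj x)
  then obtain h where "h \<in> G" "mc (2^a) h x" "mc (3^b) h 1" by blast
  then show ?case using G_adj mc_adj[of "2^a" h x] mc_adj[of "3^b" h 1] by (metis adj_one)
qed


lemma zof10: "zof (1,0) = 1" by (simp add: zz_01)

lemma GammaMod_SL2: assumes "X \<in> GammaMod q" shows "X \<in> SL2mod q"
proof -
  obtain \<gamma> where g: "\<gamma> \<in> Gamma" "X = mred q \<gamma>" using assms unfolding GammaMod_def by auto
  have "cv \<gamma> \<in> G" using g(1) unfolding G_def by auto
  then have d1: "det2 (cv \<gamma>) = 1" by (rule G_det)
  have "mc q (cv X) (cv \<gamma>)" unfolding g(2) by (rule mc_mred)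
  then have "zc q (det2 (cv X)) 1" using mc_det d1 by metis
  then have "zs_red q (mdet X) = zs_red q (1,0)" unfolding zs_red_eq zof_mdet zof10 .
  moreover have "mred q X = X" unfolding g(2) by (rule mred_idem)
  ultimately show ?thesis unfolding SL2mod_def by simp
qed

lemma lift: assumes "mred q X = X" "g \<in> G" "mc q g (cv X)" shows "X \<in> GammaMod q"
proof -
  obtain \<gamma> where "\<gamma> \<in> Gamma" "g = cv \<gamma>" using assms(2) unfolding G_def by auto
  then have "mred q \<gamma> = mred q X" using assms(3) mred_eq by simp
  then show ?thesis unfolding GammaMod_def using \<open>\<gamma> \<in> Gamma\<close> assms(1) by (metis image_eqI)
qed

lemma SL2_det: assumes "X \<in> SL2mod q" shows "zc q (det2 (cv X)) 1"
proof -
  have "zs_red q (mdet X) = zs_red q (1,0)" using assms unfolding SL2mod_def by blast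
  then show ?thesis unfolding zs_red_eq zof_mdet zof10 .
qed

lemma part2: assumes "q > 0" "gcd q 6 = 1" shows "GammaMod q = SL2mod q"
proof
  show "GammaMod q \<subseteq> SL2mod q" using GammaMod_SL2 by blast
  show "SL2mod q \<subseteq> GammaMod q"
  proof
    fix X assume X: "X \<in> SL2mod q"
    have c6: "coprime q 6" using assms(2) by (simp add: coprime_iff_gcd_eq_1)
    obtain g where "g \<in> G" "mc q g (cv X)" "mc 1 g 1"
      using Lm[OF c6 _ assms(1), of 1 "cv X"] SL2_det[OF X] by auto
    moreover have "mred q X = X" using X unfolding SL2mod_def by simp
    ultimately show "X \<in> GammaMod q" using lift by blast
  qed
qed

lemma mred_mI: assumes "mred n mI = mI" "mred n X = mI" shows "mc n (cv X) 1"
  using mred_eq[of n X mI] cv_mI assms by simp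

lemma mI_Gamma: "mI \<in> GammaMod n" if "mred n mI = mI"
  using that Gamma.id unfolding GammaMod_def by (metis image_eqI)

lemma part3: assumes "3 \<le> l"
  shows "{X \<in> GammaMod (2 ^ l). mred 8 X = mI} = {X \<in> SL2mod (2 ^ l). mred 8 X = mI}"
proof
  show "{X \<in> GammaMod (2 ^ l). mred 8 X = mI} \<subseteq> {X \<in> SL2mod (2 ^ l). mred 8 X = mI}"
    using GammaMod_SL2 by blast
  show "{X \<in> SL2mod (2 ^ l). mred 8 X = mI} \<subseteq> {X \<in> GammaMod (2 ^ l). mred 8 X = mI}"
  proof (safe)
    fix X assume X: "X \<in> SL2mod (2^l)" "mred 8 X = mI"
    have id: "mred (2^l) X = X" using X(1) unfolding SL2mod_def by simp
    show "X \<in> GammaMod (2^l)"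
    proof (cases "l = 3")
      case True
      then have "X = mI" using id X(2) by simp
      then show ?thesis using True mI_Gamma[of 8] by (simp add: mI_def)
    next
      case False
      then have "4 \<le> l" using assms by simp
      then obtain g where "g \<in> G" "mc (2^l) g (cv X)"
        using K2[of l "cv X" 0] mred_mI[OF _ X(2)] SL2_det[OF X(1)] by (auto simp: mI_def)
      then show ?thesis using lift id by blast
    qed
  qed
qed

lemma part4: assumes "1 \<le> l"
  shows "{X \<in> GammaMod (3 ^ l). mred 3 X = mI} = {X \<in> SL2mod (3 ^ l). mred 3 X = mI}"
proof
  show "{X \<in> GammaMod (3 ^ l). mred 3 X = mI} \<subseteq> {X \<in> SL2mod (3 ^ l). mred 3 X = mI}"
    using GammaMod_SL2 by blast
  show "{X \<in> SL2mod (3 ^ l). mred 3 X = mI} \<subseteq> {X \<in> GammaMod (3 ^ l). mred 3 X = mI}"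
  proof (safe)
    fix X assume X: "X \<in> SL2mod (3^l)" "mred 3 X = mI"
    have id: "mred (3^l) X = X" using X(1) unfolding SL2mod_def by simp
    show "X \<in> GammaMod (3^l)"
    proof (cases "l = 1")
      case True
      then have "X = mI" using id X(2) by simp
      then show ?thesis using True mI_Gamma[of 3] by (simp add: mI_def)
    next
      case False
      then have "2 \<le> l" using assms by simp
      then obtain g where "g \<in> G" "mc (3^l) g (cv X)"
        using K3[of l "cv X" 0] mred_mI[OF _ X(2)] SL2_det[OF X(1)] by (auto simp: mI_def)
      then show ?thesis using lift id by blast
    qed
  qed
qed


lemma dvd_primes:
  fixes q n :: int
  assumes "q > 0" "\<forall>p\<in>prime_factors q. p ^ multiplicity p q dvd n"
  shows "q dvd n"
proof (cases "n = 0")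
  case True then show ?thesis by simp
next
  case False
  show ?thesis
  proof (rule multiplicity_le_imp_dvd)
    show "q \<noteq> 0" using assms(1) by simp
    fix p :: int assume p: "prime p"
    show "multiplicity p q \<le> multiplicity p n"
    proof (cases "p \<in> prime_factors q")
      case True
      then have "p ^ multiplicity p q dvd n" using assms(2) by blast
      moreover have "\<not> is_unit p" using p not_prime_unit by blast
      ultimately show ?thesis using multiplicity_geI[OF False] by blast
    next
      case False
      then have "\<not> p dvd q" using p assms(1) by (auto simp: in_prime_factors_iff)
      then show ?thesis by (simp add: not_dvd_imp_multiplicity_0)
    qed
  qed
qed


lemma mc_primes:
  assumes "q > 0" "\<forall>p\<in>prime_factors q. mc (p ^ multiplicity p q) A B"
  shows "mc q A B"
proof -
  obtain a1 a2 a3 a4 a5 a6 a7 a8 where A: "A = M (Z a1 a2) (Z a3 a4) (Z a5 a6) (Z a7 a8)"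
    by (metis m2.exhaust zz.exhaust)
  obtain b1 b2 b3 b4 b5 b6 b7 b8 where B: "B = M (Z b1 b2) (Z b3 b4) (Z b5 b6) (Z b7 b8)"
    by (metis m2.exhaust zz.exhaust)
  have H: "\<forall>p\<in>prime_factors q. p ^ multiplicity p q dvd a1 - b1 \<and> p ^ multiplicity p q dvd a2 - b2
    \<and> p ^ multiplicity p q dvd a3 - b3 \<and> p ^ multiplicity p q dvd a4 - b4
    \<and> p ^ multiplicity p q dvd a5 - b5 \<and> p ^ multiplicity p q dvd a6 - b6
    \<and> p ^ multiplicity p q dvd a7 - b7 \<and> p ^ multiplicity p q dvd a8 - b8"
    using assms(2) by (simp add: A B zc_Z)
  show ?thesis unfolding A B mc.simps zc_Z
    by (intro conjI; rule dvd_primes[OF assms(1)]; use H in blast)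
qed

lemma pp_dvd_cofactor:
  fixes q p r :: int
  assumes "q > 0" "prime p" "prime r" "r \<noteq> p"
  shows "r ^ multiplicity r q dvd q div p ^ multiplicity p q"
proof -
  have q: "q = p ^ multiplicity p q * (q div p ^ multiplicity p q)"
    by (metis dvd_mult_div_cancel multiplicity_dvd)
  have "coprime (r ^ multiplicity r q) (p ^ multiplicity p q)"
    using primes_coprime[OF assms(3,2,4)] by simp
  moreover have "r ^ multiplicity r q dvd p ^ multiplicity p q * (q div p ^ multiplicity p q)"
    using multiplicity_dvd q by metis
  ultimately show ?thesis using coprime_dvd_mult_right_iff by blast
qed

lemma part1:
  fixes q :: int
  assumes qpos: "q > 0"
  shows "bij_betw (\<lambda>X. restrict (\<lambda>p. mred (p ^ multiplicity p q) X) (prime_factors q))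
        (GammaMod q) (PiE (prime_factors q) (\<lambda>p. GammaMod (p ^ multiplicity p q)))"
proof -
  define P where "P = prime_factors q"
  define k where "k p = multiplicity p q" for p
  define ff where "ff X = restrict (\<lambda>p. mred (p ^ k p) X) P" for X
  have kd: "p ^ k p dvd q" for p unfolding k_def by (rule multiplicity_dvd)
  have inj: "inj_on ff (GammaMod q)"
  proof (rule inj_onI)
    fix X Y assume X: "X \<in> GammaMod q" and Y: "Y \<in> GammaMod q" and e: "ff X = ff Y"
    have "\<forall>p\<in>P. mc (p ^ k p) (cv X) (cv Y)"
    proof
      fix p assume "p \<in> P"
      then have "mred (p ^ k p) X = mred (p ^ k p) Y" using fun_cong[OF e, of p] unfolding ff_def by simp
      then show "mc (p ^ k p) (cv X) (cv Y)" using mred_eq by blast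
    qed
    then have "mc q (cv X) (cv Y)" using mc_primes[OF qpos] unfolding P_def k_def by blast
    then have "mred q X = mred q Y" using mred_eq by blast
    moreover have "mred q X = X" "mred q Y = Y" using X Y GammaMod_SL2 unfolding SL2mod_def by auto
    ultimately show "X = Y" by simp
  qed
  have sub: "ff ` GammaMod q \<subseteq> PiE P (\<lambda>p. GammaMod (p ^ k p))"
  proof
    fix Z assume "Z \<in> ff ` GammaMod q"
    then obtain \<gamma> where g: "\<gamma> \<in> Gamma" "Z = ff (mred q \<gamma>)" unfolding GammaMod_def by auto
    have "\<forall>p\<in>P. mred (p ^ k p) (mred q \<gamma>) \<in> GammaMod (p ^ k p)"
      using mred_mred[OF kd] g(1) unfolding GammaMod_def by auto
    then show "Z \<in> PiE P (\<lambda>p. GammaMod (p ^ k p))" unfolding g(2) ff_def restrict_PiE_iff .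
  qed
  have sup: "PiE P (\<lambda>p. GammaMod (p ^ k p)) \<subseteq> ff ` GammaMod q"
  proof
    fix FF assume FF: "FF \<in> PiE P (\<lambda>p. GammaMod (p ^ k p))"
    have "\<forall>p\<in>P. \<exists>\<gamma>\<in>Gamma. FF p = mred (p ^ k p) \<gamma>"
      using PiE_mem[OF FF] unfolding GammaMod_def by blast
    then obtain Gf where Gf: "\<forall>p\<in>P. Gf p \<in> Gamma \<and> FF p = mred (p ^ k p) (Gf p)"
      by metis
    define c where "c p = (if p \<in> P then cv (Gf p) else 1)" for p
    have cG: "c p \<in> G" for p unfolding c_def G_def using Gf G_one[unfolded G_def] by auto
    obtain h where h: "h \<in> G" "mc (2 ^ k 2) h (c 2 * adj (c 3))" "mc (3 ^ k 3) h 1"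
      using Mix[OF G_mult[OF cG G_adj[OF cG]], where a="k 2" and b="k 3"] by blast
    define P' where "P' = P - {2, 3}"
    have finP: "finite P" unfolding P_def by simp
    have main: "S \<subseteq> P' \<Longrightarrow> \<exists>Y\<in>G. mc (2 ^ k 2) Y (c 2) \<and> mc (3 ^ k 3) Y (c 3) \<and>
        (\<forall>p\<in>S. mc (p ^ k p) Y (c p))" for S
    proof (induct S rule: infinite_finite_induct)
      case (infinite S)
      then have "finite S" using finite_subset[of S P'] finP unfolding P'_def by auto
      then show ?case using infinite by simp
    next
      case empty
      have "mc (2 ^ k 2) (h * c 3) (c 2 * adj (c 3) * c 3)" using mc_mult[OF h(2) mc_refl] .
      then have "mc (2 ^ k 2) (h * c 3) (c 2)" using G_inv(2)[OF cG] by (simp add: mult.assoc)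
      moreover have "mc (3 ^ k 3) (h * c 3) (c 3)" using mc_mult[OF h(3) mc_refl[of _ "c 3"]] by simp
      ultimately show ?case using G_mult[OF h(1) cG] by blast
    next
      case (insert p S)
      then obtain Y where Y: "Y \<in> G" "mc (2 ^ k 2) Y (c 2)" "mc (3 ^ k 3) Y (c 3)"
        "\<forall>p'\<in>S. mc (p' ^ k p') Y (c p')" by blast
      have pP: "p \<in> P" "p \<noteq> 2" "p \<noteq> 3" using insert(4) unfolding P'_def by auto
      have pprime: "prime p" using pP(1) unfolding P_def by auto
      define qp where "qp = p ^ k p"
      define Qp where "Qp = q div qp"
      have qQ: "q = qp * Qp" unfolding Qp_def qp_def using kd[of p] by (metis dvd_mult_div_cancel)
      have qppos: "qp > 0" unfolding qp_def using pprime prime_gt_0_int by simp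
      have Qppos: "Qp > 0" using qQ qpos qppos by (simp add: zero_less_mult_iff)
      have "\<not> p dvd Qp" unfolding Qp_def qp_def k_def by (rule multiplicity_decompose) (use qpos pprime not_prime_unit in auto)
      then have "coprime p Qp" using prime_imp_coprime pprime by blast
      then have copQ: "coprime Qp qp" unfolding qp_def by (simp add: coprime_commute)
      have "coprime p 2" "coprime p 3"
        using primes_coprime[OF pprime, of 2] primes_coprime[OF pprime, of 3] pP by auto
      moreover have e6: "(6::int) = 2*3" by simp
      ultimately have "coprime p 6" unfolding e6 using coprime_mult_right_iff by blast
      then have cop6: "coprime qp 6" unfolding qp_def by simp
      have "det2 (adj Y * c p) = 1" by (simp add: det_mult det_adj G_det[OF Y(1)] G_det[OF cG])
      then obtain g where g: "g \<in> G" "mc qp g (adj Y * c p)" "mc Qp g 1"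
        using Lm[OF cop6 copQ qppos Qppos, of "adj Y * c p"] by auto
      define Y' where "Y' = Y * g"
      have "mc qp Y' (Y * (adj Y * c p))" unfolding Y'_def using mc_mult[OF mc_refl g(2)] .
      then have m1: "mc (p ^ k p) Y' (c p)" using G_inv(1)[OF Y(1)] unfolding qp_def
        by (simp add: mult.assoc[symmetric])
      have shift: "d dvd Qp \<Longrightarrow> mc d Y' Y" for d
      proof -
        assume "d dvd Qp"
        then have "mc d g 1" using mc_dvd g(3) by blast
        then show ?thesis unfolding Y'_def using mc_mult[OF mc_refl[of _ Y]] by fastforce
      qed
      have d2: "2 ^ k 2 dvd Qp" unfolding Qp_def qp_def k_def
        using pp_dvd_cofactor[OF qpos pprime, of 2] pP by simp
      have d3: "3 ^ k 3 dvd Qp" unfolding Qp_def qp_def k_def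
        using pp_dvd_cofactor[OF qpos pprime, of 3] pP by simp
      have "\<forall>p'\<in>insert p S. mc (p' ^ k p') Y' (c p')"
      proof
        fix p' assume "p' \<in> insert p S"
        then show "mc (p' ^ k p') Y' (c p')"
        proof
          assume "p' = p" then show ?thesis using m1 by simp
        next
          assume p'S: "p' \<in> S"
          then have "p' \<in> P" "p' \<noteq> p" using insert unfolding P'_def by auto
          then have "p' ^ k p' dvd Qp" unfolding Qp_def qp_def k_def P_def
            using pp_dvd_cofactor[OF qpos pprime] by auto
          then show ?thesis using shift Y(4) p'S mc_trans by blast
        qed
      qed
      moreover have "mc (2 ^ k 2) Y' (c 2)" using shift[OF d2] Y(2) mc_trans by blast
      moreover have "mc (3 ^ k 3) Y' (c 3)" using shift[OF d3] Y(3) mc_trans by blast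
      moreover have "Y' \<in> G" unfolding Y'_def using G_mult Y(1) g(1) by blast
      ultimately show ?case by blast
    qed
    obtain Y where Y: "Y \<in> G" "mc (2 ^ k 2) Y (c 2)" "mc (3 ^ k 3) Y (c 3)"
        "\<forall>p\<in>P'. mc (p ^ k p) Y (c p)" using main[of P'] by blast
    obtain \<gamma> where g: "\<gamma> \<in> Gamma" "Y = cv \<gamma>" using Y(1) unfolding G_def by auto
    have "ff (mred q \<gamma>) = FF"
    proof
      fix p show "ff (mred q \<gamma>) p = FF p"
      proof (cases "p \<in> P")
        case True
        have "mc (p ^ k p) Y (c p)" using Y True unfolding P'_def by (cases "p = 2"; cases "p = 3") auto
        then have "mred (p ^ k p) \<gamma> = mred (p ^ k p) (Gf p)" using True g(2) mred_eq unfolding c_def by simp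
        then show ?thesis using True Gf mred_mred[OF kd] unfolding ff_def by simp
      next
        case False
        then show ?thesis unfolding ff_def using PiE_arb[OF FF False] by simp
      qed
    qed
    moreover have "mred q \<gamma> \<in> GammaMod q" using g(1) unfolding GammaMod_def by blast
    ultimately show "FF \<in> ff ` GammaMod q" by blast
  qed
  have "bij_betw ff (GammaMod q) (PiE P (\<lambda>p. GammaMod (p ^ k p)))"
    unfolding bij_betw_def using inj sub sup by blast
  then show ?thesis unfolding ff_def P_def k_def .
qed


theorem lemma2p5:
  shows
  "(\<forall>q::int. q > 0 \<longrightarrow>
      bij_betw (\<lambda>X. restrict (\<lambda>p. mred (p ^ multiplicity p q) X) (prime_factors q))
        (GammaMod q)
        (PiE (prime_factors q) (\<lambda>p. GammaMod (p ^ multiplicity p q))))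
 \<and> (\<forall>q::int. q > 0 \<longrightarrow> gcd q 6 = 1 \<longrightarrow> GammaMod q = SL2mod q)
 \<and> (\<forall>l::nat. l \<ge> 3 \<longrightarrow>
      {X \<in> GammaMod (2 ^ l). mred 8 X = mI} = {X \<in> SL2mod (2 ^ l). mred 8 X = mI})
 \<and> (\<forall>l::nat. l \<ge> 1 \<longrightarrow>
      {X \<in> GammaMod (3 ^ l). mred 3 X = mI} = {X \<in> SL2mod (3 ^ l). mred 3 X = mI})"
    using part1 part2 part3 part4 by blast

end
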